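(* Let $q \in \mathbb{N}$. Suppose $\psi(\cdot,t)\in \mathcal{F}$ and set $\bar{\psi}(\cdot,t) := \Upsilon (\psi(\cdot,t))$ for all $t \in \mathbb{R}_+$. The following are equivalent. (i) $\psi(\cdot,t) \in \mathcal{D}^q$ for all $t \ge 0$, and $\psi \in C^q(\mathbb{R}_+^2,\mathbb{R}_+)^{I}$. (ii) $\bar{\psi}(\cdot,t) \in \bar{\mathcal{D}}^q$ for all $t \ge 0$, and $\bar{\psi} \in C^q(\mathbb{R}_+^2,\mathbb{R}_+)^{I}$.
   Context: Fix $I\in\mathbb{N}$. $\mathcal{C}=\{f\in C(\mathbb{R}_+,\mathbb{R}_+):f(0)=0,f\text{ non-decreasing}\}$, $\mathcal{C}^\uparrow=\{f\in\mathcal{C}:f\text{ strictly increasing},\lim_{u\to\infty}f(u)=\infty\}$. $\mathcal{C}^q=\{f\in\mathcal{C}:f^{\mathbb{R}}\in C^q(\mathbb{R},\mathbb{R})\}$ where $f^{\mathbb{R}}$ is the extension of $f$ by $0$ to $(-\infty,0)$. For $\psi\in\mathcal{C}^I$, $\phi_i(u)=u-\sum_{j=1}^I2(i\wedge j)\psi_j(u)$. $\mathcal{F}=\{\psi\in\mathcal{C}^I:\phi_I\in\mathcal{C}^\uparrow\}$ (then every $\phi_i\in\mathcal{C}^\uparrow$), $\Upsilon(\psi)_i=\psi_i\circ\phi_i^{-1}$. $\mathcal{D}=\{\psi\in\mathcal{F}:\sum_ii\sup_{u_1\neq u_2}\frac{\psi_i(u_1)-\psi_i(u_2)}{\phi_i(u_1)-\phi_i(u_2)}<\frac12\}$,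 $\bar{\mathcal{D}}=\{\bar\psi\in\mathcal{C}^I:\sum_ii\sup_{z_1\neq z_2}\frac{\bar\psi_i(z_1)-\bar\psi_i(z_2)}{z_1-z_2}<\frac12\}$, $\mathcal{D}^q=\mathcal{D}\cap(\mathcal{C}^q)^I$, $\bar{\mathcal{D}}^q=\bar{\mathcal{D}}\cap(\mathcal{C}^q)^I$. *)

theory Defs
  imports "HOL-Analysis.Analysis"
begin

text \<open>Functions on R_+ are modelled as real => real; only values on {0..} matter.\<close>

definition zext :: "(real \<Rightarrow> real) \<Rightarrow> real \<Rightarrow> real" where
  "zext f x = (if x < 0 then 0 else f x)"

fun Ck :: "nat \<Rightarrow> (real \<Rightarrow> real) \<Rightarrow> bool" where
  "Ck 0 f = continuous_on UNIV f"
| "Ck (Suc q) f = ((\<forall>x. f differentiable (at x)) \<and> Ck q (deriv f))"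

fun Ck2 :: "nat \<Rightarrow> (real \<times> real) set \<Rightarrow> (real \<times> real \<Rightarrow> real) \<Rightarrow> bool" where
  "Ck2 0 S f = continuous_on S f"
| "Ck2 (Suc q) S f = (\<exists>g h. (\<forall>x\<in>S. (f has_derivative (\<lambda>v. fst v * g x + snd v * h x)) (at x within S))
                          \<and> Ck2 q S g \<and> Ck2 q S h)"

definition inC :: "(real \<Rightarrow> real) \<Rightarrow> bool" where
  "inC f \<longleftrightarrow> continuous_on {0..} f \<and> (\<forall>u\<ge>0. f u \<ge> 0) \<and> f 0 = 0 \<and> mono_on {0..} f"

definition inCup :: "(real \<Rightarrow> real) \<Rightarrow> bool" where
  "inCup f \<longleftrightarrow> inC f \<and> strict_mono_on {0..} f \<and> filterlim f at_top at_top"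

definition inCq :: "nat \<Rightarrow> (real \<Rightarrow> real) \<Rightarrow> bool" where
  "inCq q f \<longleftrightarrow> inC f \<and> Ck q (zext f)"

definition phi :: "nat \<Rightarrow> (nat \<Rightarrow> real \<Rightarrow> real) \<Rightarrow> nat \<Rightarrow> real \<Rightarrow> real" where
  "phi I \<psi> i u = u - (\<Sum>j=1..I. 2 * real (min i j) * \<psi> j u)"

definition inF :: "nat \<Rightarrow> (nat \<Rightarrow> real \<Rightarrow> real) \<Rightarrow> bool" where
  "inF I \<psi> \<longleftrightarrow> (\<forall>i\<in>{1..I}. inC (\<psi> i)) \<and> inCup (phi I \<psi> I)"

definition Upsilon :: "nat \<Rightarrow> (nat \<Rightarrow> real \<Rightarrow> real) \<Rightarrow> nat \<Rightarrow> real \<Rightarrow> real" where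
  "Upsilon I \<psi> i = \<psi> i \<circ> the_inv_into {0..} (phi I \<psi> i)"

definition inD :: "nat \<Rightarrow> (nat \<Rightarrow> real \<Rightarrow> real) \<Rightarrow> bool" where
  "inD I \<psi> \<longleftrightarrow> inF I \<psi> \<and>
     (\<Sum>i=1..I. ereal (real i) *
        (SUP p\<in>{(a,b). a \<ge> 0 \<and> b \<ge> 0 \<and> a \<noteq> (b::real)}.
           ereal ((\<psi> i (fst p) - \<psi> i (snd p)) / (phi I \<psi> i (fst p) - phi I \<psi> i (snd p))))) < 1/2"

definition inDbar :: "nat \<Rightarrow> (nat \<Rightarrow> real \<Rightarrow> real) \<Rightarrow> bool" where
  "inDbar I \<psi>b \<longleftrightarrow> (\<forall>i\<in>{1..I}. inC (\<psi>b i)) \<and>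
     (\<Sum>i=1..I. ereal (real i) *
        (SUP p\<in>{(a,b). a \<ge> 0 \<and> b \<ge> 0 \<and> a \<noteq> (b::real)}.
           ereal ((\<psi>b i (fst p) - \<psi>b i (snd p)) / (fst p - snd p)))) < 1/2"

definition inDq :: "nat \<Rightarrow> nat \<Rightarrow> (nat \<Rightarrow> real \<Rightarrow> real) \<Rightarrow> bool" where
  "inDq q I \<psi> \<longleftrightarrow> inD I \<psi> \<and> (\<forall>i\<in>{1..I}. inCq q (\<psi> i))"

definition inDbarq :: "nat \<Rightarrow> nat \<Rightarrow> (nat \<Rightarrow> real \<Rightarrow> real) \<Rightarrow> bool" where
  "inDbarq q I \<psi>b \<longleftrightarrow> inDbar I \<psi>b \<and> (\<forall>i\<in>{1..I}. inCq q (\<psi>b i))"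

definition inCq2 :: "nat \<Rightarrow> (real \<Rightarrow> real \<Rightarrow> real) \<Rightarrow> bool" where
  "inCq2 q f \<longleftrightarrow> Ck2 q ({0..} \<times> {0..}) (\<lambda>(u,t). f u t) \<and> (\<forall>u\<ge>0. \<forall>t\<ge>0. f u t \<ge> 0)"

end

theory Submission
  imports Defs
begin

lemma Ck2_cont: "Ck2 k S f \<Longrightarrow> continuous_on S f"
proof (induction k arbitrary: f)
  case 0 then show ?case by simp
next
  case (Suc k)
  then obtain g h where d: "\<forall>x\<in>S. (f has_derivative (\<lambda>v. fst v * g x + snd v * h x)) (at x within S)" by auto
  show ?case unfolding continuous_on_eq_continuous_within
    using d has_derivative_continuous by blast
qed

lemma Ck2_Suc_le: "Ck2 (Suc k) S f \<Longrightarrow> Ck2 k S f"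
proof (induction k arbitrary: f)
  case 0 then show ?case using Ck2_cont[of "Suc 0" S f] unfolding Ck2.simps(1) by blast
next
  case (Suc k)
  from Suc.prems obtain g h where d: "\<forall>x\<in>S. (f has_derivative (\<lambda>v. fst v * g x + snd v * h x)) (at x within S)"
    and "Ck2 (Suc k) S g" "Ck2 (Suc k) S h" unfolding Ck2.simps(2)[of "Suc k"] by blast
  then have "Ck2 k S g" "Ck2 k S h" using Suc.IH by blast+
  then show ?case using d unfolding Ck2.simps(2)[of k] by blast
qed

lemma Ck2_le: "Ck2 m S f \<Longrightarrow> k \<le> m \<Longrightarrow> Ck2 k S f"
proof (induction m arbitrary: k)
  case 0 then show ?case by simp
next
  case (Suc m) show ?case
  proof (cases "k = Suc m")
    case True then show ?thesis using Suc.prems by blast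
  next
    case False then have "k \<le> m" using Suc.prems by linarith
    then show ?thesis using Suc.IH Ck2_Suc_le[OF Suc.prems(1)] by blast
  qed
qed

lemma Ck2_cong: "Ck2 k S f \<Longrightarrow> (\<And>x. x\<in>S \<Longrightarrow> f x = f' x) \<Longrightarrow> Ck2 k S f'"
proof (induction k arbitrary: f f')
  case 0 then show ?case using continuous_on_cong[of S S f f'] unfolding Ck2.simps(1) by blast
next
  case (Suc k)
  from Suc.prems(1) obtain g h where d: "\<forall>x\<in>S. (f has_derivative (\<lambda>v. fst v * g x + snd v * h x)) (at x within S)"
    and "Ck2 k S g" "Ck2 k S h" unfolding Ck2.simps(2)[of k] by blast
  moreover have "\<forall>x\<in>S. (f' has_derivative (\<lambda>v. fst v * g x + snd v * h x)) (at x within S)"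
    using d Suc.prems(2) by (meson has_derivative_transform_within zero_less_one)
  ultimately show ?case unfolding Ck2.simps(2)[of k] by blast
qed

lemma Ck2_SucI:
  assumes "\<And>x. x\<in>S \<Longrightarrow> (f has_derivative (\<lambda>v. fst v * g x + snd v * h x)) (at x within S)"
    and "Ck2 k S g" and "Ck2 k S h"
  shows "Ck2 (Suc k) S f"
  unfolding Ck2.simps(2)[of k] using assms by blast

lemma Ck2_SucE:
  assumes "Ck2 (Suc k) S f"
  obtains g h where "\<And>x. x\<in>S \<Longrightarrow> (f has_derivative (\<lambda>v. fst v * g x + snd v * h x)) (at x within S)"
    and "Ck2 k S g" and "Ck2 k S h"
  using assms unfolding Ck2.simps(2)[of k] by blast

lemma Ck2_const: "Ck2 k S (\<lambda>x. c)"
proof (induction k arbitrary: c)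
  case 0 then show ?case by simp
next
  case (Suc k)
  have "((\<lambda>x. c) has_derivative (\<lambda>v. fst v * 0 + snd v * 0)) (at x within S)" for x
    by simp
  then show ?case using Suc Ck2_SucI[of S "\<lambda>x. c" "\<lambda>x. 0" "\<lambda>x. 0" k] by blast
qed

lemma Ck2_fst: "Ck2 k S fst"
proof (cases k)
  case 0 then show ?thesis by (simp add: continuous_on_fst)
next
  case (Suc m)
  have "(fst has_derivative (\<lambda>v. fst v * 1 + snd v * 0)) (at x within S)" for x
    by (simp add: has_derivative_fst[OF has_derivative_ident])
  then show ?thesis using Suc Ck2_const Ck2_SucI[of S fst "\<lambda>x. 1" "\<lambda>x. 0" m] by blast
qed

lemma Ck2_snd: "Ck2 k S snd"
proof (cases k)
  case 0 then show ?thesis by (simp add: continuous_on_snd)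
next
  case (Suc m)
  have "(snd has_derivative (\<lambda>v. fst v * 0 + snd v * 1)) (at x within S)" for x
    by (simp add: has_derivative_snd[OF has_derivative_ident])
  then show ?thesis using Suc Ck2_const Ck2_SucI[of S snd "\<lambda>x. 0" "\<lambda>x. 1" m] by blast
qed

lemma Ck2_add: "Ck2 k S f \<Longrightarrow> Ck2 k S g \<Longrightarrow> Ck2 k S (\<lambda>x. f x + g x)"
proof (induction k arbitrary: f g)
  case 0 then show ?case by (simp add: continuous_on_add)
next
  case (Suc k)
  from Suc.prems(1) obtain f1 f2 where f: "\<And>x. x\<in>S \<Longrightarrow> (f has_derivative (\<lambda>v. fst v * f1 x + snd v * f2 x)) (at x within S)"
    and f12: "Ck2 k S f1" "Ck2 k S f2" using Ck2_SucE[OF Suc.prems(1)] by blast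
  from Suc.prems(2) obtain g1 g2 where g: "\<And>x. x\<in>S \<Longrightarrow> (g has_derivative (\<lambda>v. fst v * g1 x + snd v * g2 x)) (at x within S)"
    and g12: "Ck2 k S g1" "Ck2 k S g2" using Ck2_SucE[OF Suc.prems(2)] by blast
  show ?case
  proof (rule Ck2_SucI[where g="\<lambda>x. f1 x + g1 x" and h="\<lambda>x. f2 x + g2 x"])
    fix x assume "x \<in> S"
    have "((\<lambda>x. f x + g x) has_derivative (\<lambda>v. (fst v * f1 x + snd v * f2 x) + (fst v * g1 x + snd v * g2 x))) (at x within S)"
      using f g \<open>x\<in>S\<close> by (intro has_derivative_add)
    then show "((\<lambda>x. f x + g x) has_derivative (\<lambda>v. fst v * (f1 x + g1 x) + snd v * (f2 x + g2 x))) (at x within S)"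
      by (rule has_derivative_eq_rhs) (simp add: fun_eq_iff algebra_simps)
  qed (use Suc.IH f12 g12 in blast)+
qed

lemma Ck2_mult: "Ck2 k S f \<Longrightarrow> Ck2 k S g \<Longrightarrow> Ck2 k S (\<lambda>x. f x * g x)"
proof (induction k arbitrary: f g)
  case 0 then show ?case by (simp add: continuous_on_mult)
next
  case (Suc k)
  from Suc.prems(1) obtain f1 f2 where f: "\<And>x. x\<in>S \<Longrightarrow> (f has_derivative (\<lambda>v. fst v * f1 x + snd v * f2 x)) (at x within S)"
    and f12: "Ck2 k S f1" "Ck2 k S f2" using Ck2_SucE[OF Suc.prems(1)] by blast
  from Suc.prems(2) obtain g1 g2 where g: "\<And>x. x\<in>S \<Longrightarrow> (g has_derivative (\<lambda>v. fst v * g1 x + snd v * g2 x)) (at x within S)"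
    and g12: "Ck2 k S g1" "Ck2 k S g2" using Ck2_SucE[OF Suc.prems(2)] by blast
  have fk: "Ck2 k S f" "Ck2 k S g" using Suc.prems Ck2_Suc_le by blast+
  show ?case
  proof (rule Ck2_SucI[where g="\<lambda>x. f x * g1 x + f1 x * g x" and h="\<lambda>x. f x * g2 x + f2 x * g x"])
    fix x assume "x \<in> S"
    have "((\<lambda>x. f x * g x) has_derivative (\<lambda>v. f x * (fst v * g1 x + snd v * g2 x) + (fst v * f1 x + snd v * f2 x) * g x)) (at x within S)"
      using f g \<open>x\<in>S\<close> by (intro has_derivative_mult)
    then show "((\<lambda>x. f x * g x) has_derivative (\<lambda>v. fst v * (f x * g1 x + f1 x * g x) + snd v * (f x * g2 x + f2 x * g x))) (at x within S)"
      by (rule has_derivative_eq_rhs) (simp add: fun_eq_iff algebra_simps)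
  qed (use Suc.IH Ck2_add fk f12 g12 in blast)+
qed

lemma Ck2_cmult: "Ck2 k S f \<Longrightarrow> Ck2 k S (\<lambda>x. c * f x)"
  using Ck2_mult[OF Ck2_const] by blast

lemma Ck2_diff: "Ck2 k S f \<Longrightarrow> Ck2 k S g \<Longrightarrow> Ck2 k S (\<lambda>x. f x - g x)"
proof -
  assume a: "Ck2 k S f" "Ck2 k S g"
  have "Ck2 k S (\<lambda>x. f x + (-1) * g x)" using Ck2_add[OF a(1) Ck2_cmult[OF a(2)]] .
  then show ?thesis by simp
qed

lemma Ck2_sum: "finite J \<Longrightarrow> (\<And>j. j \<in> J \<Longrightarrow> Ck2 k S (f j)) \<Longrightarrow> Ck2 k S (\<lambda>x. \<Sum>j\<in>J. f j x)"
proof (induction J rule: finite_induct)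
  case empty then show ?case using Ck2_const[of k S 0] by simp
next
  case (insert a J)
  then have "Ck2 k S (\<lambda>x. f a x + (\<Sum>j\<in>J. f j x))" using Ck2_add[of k S "f a"] by blast
  then show ?case using insert by simp
qed



lemma Ck2_inverse: "Ck2 k S f \<Longrightarrow> (\<forall>x\<in>S. f x > 0) \<Longrightarrow> Ck2 k S (\<lambda>x. 1 / f x)"
proof (induction k arbitrary: f)
  case 0 then show ?case by (auto intro!: continuous_on_divide continuous_on_const)
next
  case (Suc k)
  from Suc.prems(1) obtain f1 f2 where f: "\<And>x. x\<in>S \<Longrightarrow> (f has_derivative (\<lambda>v. fst v * f1 x + snd v * f2 x)) (at x within S)"
    and f12: "Ck2 k S f1" "Ck2 k S f2" using Ck2_SucE[OF Suc.prems(1)] by blast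
  have fk: "Ck2 k S (\<lambda>x. 1 / f x)" using Suc.IH Suc.prems Ck2_Suc_le by blast
  show ?case
  proof (rule Ck2_SucI[where g="\<lambda>x. (-1) * (f1 x * ((1 / f x) * (1 / f x)))" and h="\<lambda>x. (-1) * (f2 x * ((1 / f x) * (1 / f x)))"])
    fix x assume "x \<in> S"
    then have "f x \<noteq> 0" using Suc.prems(2) by force
    have "((\<lambda>x. inverse (f x)) has_derivative (\<lambda>v. - (inverse (f x) * (fst v * f1 x + snd v * f2 x) * inverse (f x)))) (at x within S)"
      by (rule Deriv.has_derivative_inverse[OF \<open>f x \<noteq> 0\<close> f[OF \<open>x\<in>S\<close>]])
    then show "((\<lambda>x. 1 / f x) has_derivative (\<lambda>v. fst v * ((-1) * (f1 x * ((1 / f x) * (1 / f x)))) + snd v * ((-1) * (f2 x * ((1 / f x) * (1 / f x)))))) (at x within S)"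
      by (simp add: divide_inverse fun_eq_iff algebra_simps)
  qed (use Ck2_mult Ck2_cmult fk f12 in blast)+
qed

lemma Ck2_compose:
  "Ck2 k S f \<Longrightarrow> Ck2 k T a \<Longrightarrow> Ck2 k T b \<Longrightarrow> (\<forall>x\<in>T. (a x, b x) \<in> S) \<Longrightarrow> Ck2 k T (\<lambda>x. f (a x, b x))"
proof (induction k arbitrary: f a b)
  case 0
  have "continuous_on T (\<lambda>x. (a x, b x))" using 0 by (simp add: continuous_on_Pair)
  moreover have "(\<lambda>x. (a x, b x)) ` T \<subseteq> S" using 0 by auto
  ultimately show ?case using 0 continuous_on_compose2[of S f T "\<lambda>x. (a x, b x)"] by simp
next
  case (Suc k)
  from Suc.prems(1) obtain f1 f2 where f: "\<And>x. x\<in>S \<Longrightarrow> (f has_derivative (\<lambda>v. fst v * f1 x + snd v * f2 x)) (at x within S)"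
    and f12: "Ck2 k S f1" "Ck2 k S f2" using Ck2_SucE[OF Suc.prems(1)] by blast
  from Suc.prems(2) obtain a1 a2 where a: "\<And>x. x\<in>T \<Longrightarrow> (a has_derivative (\<lambda>v. fst v * a1 x + snd v * a2 x)) (at x within T)"
    and a12: "Ck2 k T a1" "Ck2 k T a2" using Ck2_SucE[OF Suc.prems(2)] by blast
  from Suc.prems(3) obtain b1 b2 where b: "\<And>x. x\<in>T \<Longrightarrow> (b has_derivative (\<lambda>v. fst v * b1 x + snd v * b2 x)) (at x within T)"
    and b12: "Ck2 k T b1" "Ck2 k T b2" using Ck2_SucE[OF Suc.prems(3)] by blast
  have abk: "Ck2 k T a" "Ck2 k T b" using Suc.prems Ck2_Suc_le by blast+
  have F1: "Ck2 k T (\<lambda>x. f1 (a x, b x))" and F2: "Ck2 k T (\<lambda>x. f2 (a x, b x))"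
    using Suc.IH f12 abk Suc.prems(4) by blast+
  show ?case
  proof (rule Ck2_SucI[where g="\<lambda>x. a1 x * f1 (a x, b x) + b1 x * f2 (a x, b x)"
                           and h="\<lambda>x. a2 x * f1 (a x, b x) + b2 x * f2 (a x, b x)"])
    fix x assume "x \<in> T"
    have p: "((\<lambda>x. (a x, b x)) has_derivative (\<lambda>v. (fst v * a1 x + snd v * a2 x, fst v * b1 x + snd v * b2 x))) (at x within T)"
      using a b \<open>x\<in>T\<close> by (intro has_derivative_Pair)
    have "((\<lambda>x. f (a x, b x)) has_derivative (\<lambda>v. fst (fst v * a1 x + snd v * a2 x, fst v * b1 x + snd v * b2 x) * f1 (a x, b x) + snd (fst v * a1 x + snd v * a2 x, fst v * b1 x + snd v * b2 x) * f2 (a x, b x))) (at x within T)"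
      using has_derivative_in_compose2[of S f "\<lambda>y v. fst v * f1 y + snd v * f2 y" "\<lambda>x. (a x, b x)" T x, OF f _ _ p] Suc.prems(4) \<open>x\<in>T\<close>
      by auto
    then show "((\<lambda>x. f (a x, b x)) has_derivative (\<lambda>v. fst v * (a1 x * f1 (a x, b x) + b1 x * f2 (a x, b x)) + snd v * (a2 x * f1 (a x, b x) + b2 x * f2 (a x, b x)))) (at x within T)"
      by (rule has_derivative_eq_rhs) (simp add: fun_eq_iff algebra_simps)
  qed (use Ck2_mult Ck2_add F1 F2 a12 b12 in blast)+
qed

lemma Ck_to_Ck2: "Ck k f \<Longrightarrow> Ck2 k S (\<lambda>p. f (fst p))"
proof (induction k arbitrary: f)
  case 0
  then have "continuous_on UNIV f" by simp
  moreover have "continuous_on S fst" using continuous_on_fst[OF continuous_on_id] by simp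
  ultimately show ?case unfolding Ck2.simps(1) using continuous_on_compose2[of UNIV f S fst] by blast
next
  case (Suc k)
  then have d: "\<And>y. f differentiable (at y)" and dk: "Ck k (deriv f)" by auto
  show ?case
  proof (rule Ck2_SucI[where g="\<lambda>p. deriv f (fst p)" and h="\<lambda>p. 0"])
    fix x :: "real \<times> real" assume "x \<in> S"
    have "(f has_derivative (\<lambda>h. deriv f y * h)) (at y within UNIV)" for y
      using d DERIV_deriv_iff_real_differentiable has_field_derivative_imp_has_derivative by blast
    then have "((\<lambda>p. f (fst p)) has_derivative (\<lambda>v. deriv f (fst x) * fst v)) (at x within S)"
      using has_derivative_in_compose2[of UNIV f "\<lambda>y h. deriv f y * h" fst S x fst] \<open>x\<in>S\<close>
        bounded_linear_imp_has_derivative[OF bounded_linear_fst, of "at x within S"]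
      by auto
    then show "((\<lambda>p. f (fst p)) has_derivative (\<lambda>v. fst v * deriv f (fst x) + snd v * 0)) (at x within S)"
      by (rule has_derivative_eq_rhs) (simp add: fun_eq_iff algebra_simps)
  qed (use Suc.IH dk Ck2_const in blast)+
qed

lemma Ck2_to_Ck: "Ck2 k (UNIV \<times> {0}) F \<Longrightarrow> Ck k (\<lambda>x. F (x, 0))"
proof (induction k arbitrary: F)
  case 0
  have "continuous_on UNIV (\<lambda>x::real. (x, 0::real))" by (simp add: continuous_on_Pair)
  moreover have "(\<lambda>x::real. (x, 0::real)) ` UNIV \<subseteq> UNIV \<times> {0}" by auto
  ultimately show ?case using 0 continuous_on_compose2[of "UNIV \<times> {0}" F UNIV "\<lambda>x. (x, 0)"] by simp
next
  case (Suc k)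
  from Suc.prems obtain g h where f: "\<And>x. x\<in>UNIV \<times> {0} \<Longrightarrow> (F has_derivative (\<lambda>v. fst v * g x + snd v * h x)) (at x within UNIV \<times> {0})"
    and gh: "Ck2 k (UNIV \<times> {0}) g" "Ck2 k (UNIV \<times> {0}) h" using Ck2_SucE[OF Suc.prems] by blast
  have D: "((\<lambda>x. F (x, 0)) has_real_derivative g (y, 0)) (at y)" for y
  proof -
    have p: "((\<lambda>x::real. (x, 0::real)) has_derivative (\<lambda>v. (v, 0))) (at y within UNIV)"
      by (auto intro!: derivative_eq_intros)
    have "((\<lambda>x. F (x, 0)) has_derivative (\<lambda>v. fst (v, 0::real) * g (y, 0) + snd (v, 0::real) * h (y, 0))) (at y within UNIV)"
      using has_derivative_in_compose2[of "UNIV \<times> {0}" F "\<lambda>x v. fst v * g x + snd v * h x" "\<lambda>x. (x, 0)" UNIV y, OF f _ _ p]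
      by auto
    then show ?thesis unfolding has_field_derivative_def
      by (rule has_derivative_eq_rhs) (simp add: fun_eq_iff algebra_simps)
  qed
  then have "deriv (\<lambda>x. F (x, 0)) = (\<lambda>y. g (y, 0))" using DERIV_imp_deriv by blast
  moreover have "Ck k (\<lambda>y. g (y, 0))" using Suc.IH gh by blast
  moreover have "(\<lambda>x. F (x, 0)) differentiable (at y)" for y using D real_differentiable_def by blast
  ultimately show ?case by simp
qed



lemma ev_in_within: "eventually (\<lambda>y. y \<in> S) (at p within S)"
  unfolding eventually_at_filter by simp

lemma deriv_lower:
  fixes h :: "real \<times> real \<Rightarrow> real"
  assumes d: "(h has_derivative (\<lambda>v. fst v * a + snd v * b)) (at (u,t) within A \<times> B)"
    and u: "u \<in> A" and t: "t \<in> B" and A: "A = UNIV \<or> A = {0..}"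
    and c: "\<And>s. 0 \<le> s \<Longrightarrow> c * s \<le> h (u+s, t) - h (u, t)"
  shows "c \<le> a"
proof -
  let ?r = "\<lambda>s::real. (u + s, t)"
  have r: "(?r has_derivative (\<lambda>s. (s, 0))) (at 0 within {0..1})"
    by (auto intro!: derivative_eq_intros)
  have sub: "?r ` {0..1} \<subseteq> A \<times> B" using u t A by auto
  have d': "(h has_derivative (\<lambda>v. fst v * a + snd v * b)) (at (?r 0) within ?r ` {0..1})"
    using has_derivative_subset[OF _ sub] d by simp
  have "((\<lambda>s. h (?r s)) has_derivative (\<lambda>s. fst (s, 0::real) * a + snd (s, 0::real) * b)) (at 0 within {0..1})"
    using has_derivative_in_compose[OF r d'] by simp
  then have "((\<lambda>s. h (?r s)) has_field_derivative a) (at 0 within {0..1})"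
    unfolding has_field_derivative_def
    by (rule has_derivative_eq_rhs) (simp add: fun_eq_iff algebra_simps)
  then have lim: "((\<lambda>y. (h (?r y) - h (?r 0)) / (y - 0)) \<longlongrightarrow> a) (at_right 0)"
    unfolding has_field_derivative_iff by (simp add: at_within_Icc_at_right)
  have ev: "eventually (\<lambda>y. c \<le> (h (?r y) - h (?r 0)) / (y - 0)) (at_right (0::real))"
    unfolding eventually_at_right_field
  proof (intro exI[of _ 1] conjI allI impI)
    fix y :: real assume "0 < y" "y < 1"
    then show "c \<le> (h (?r y) - h (?r 0)) / (y - 0)"
      using c[of y] by (simp add: pos_le_divide_eq)
  qed simp
  show ?thesis
    by (rule tendsto_lowerbound[OF lim ev]) simp
qed

lemma Ck2_inv_comp:
  fixes A B :: "real set" and h f :: "real \<times> real \<Rightarrow> real"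
  assumes A: "A = UNIV \<or> A = {0..}"
    and h: "Ck2 (Suc q) (A \<times> B) h" and f: "Ck2 (Suc q) (A \<times> B) f"
    and ex: "\<And>t. t\<in>B \<Longrightarrow> \<exists>c>0. \<forall>u1\<in>A. \<forall>u2\<in>A. u1 \<le> u2 \<longrightarrow> c*(u2-u1) \<le> h(u2,t) - h(u1,t)"
    and su: "\<And>t. t\<in>B \<Longrightarrow> (\<lambda>u. h(u,t)) ` A = A"
  shows "Ck2 (Suc q) (A \<times> B) (\<lambda>p. f (the_inv_into A (\<lambda>u. h(u, snd p)) (fst p), snd p))"
proof -
  define S where "S = A \<times> B"
  define G where "G p = the_inv_into A (\<lambda>u. h(u, snd p)) (fst p)" for p
  have Aup: "v \<in> A" if "u \<in> A" "u \<le> v" for u v using A that by auto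
  have smono: "h(u1,t) < h(u2,t)" if a: "t\<in>B" "u1\<in>A" "u2\<in>A" "u1<u2" for t u1 u2
  proof -
    obtain c where "c>0" and "\<forall>u1\<in>A. \<forall>u2\<in>A. u1 \<le> u2 \<longrightarrow> c*(u2-u1) \<le> h(u2,t) - h(u1,t)"
      using ex[OF a(1)] by blast
    then have "c*(u2-u1) \<le> h(u2,t) - h(u1,t)" using a by auto
    moreover have "0 < c*(u2-u1)" using \<open>c>0\<close> a(4) by simp
    ultimately show ?thesis by linarith
  qed
  have mono: "h(u1,t) \<le> h(u2,t)" if "t\<in>B" "u1\<in>A" "u2\<in>A" "u1\<le>u2" for t u1 u2
    using smono[OF that(1-3)] that(4) by (cases "u1 = u2") auto
  have inj: "inj_on (\<lambda>u. h(u,t)) A" if "t\<in>B" for t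
    unfolding inj_on_def
  proof (intro ballI impI)
    fix x y assume "x\<in>A" "y\<in>A" "h(x,t) = h(y,t)"
    then show "x = y" using smono[OF that, of x y] smono[OF that, of y x] by (cases x y rule: linorder_cases) auto
  qed
  have GA: "G p \<in> A" if "p \<in> S" for p
    unfolding G_def using that su[of "snd p"] inj[of "snd p"] unfolding S_def
    by (intro the_inv_into_into) (auto simp: mem_Times_iff)
  have hG: "h(G p, snd p) = fst p" if "p \<in> S" for p
    unfolding G_def using that su[of "snd p"] inj[of "snd p"] unfolding S_def
    by (intro f_the_inv_into_f[where f="\<lambda>u. h(u, snd p)", simplified]) (auto simp: mem_Times_iff)
  have Gh: "G (h(u,t), t) = u" if "u\<in>A" "t\<in>B" for u t
    unfolding G_def using the_inv_into_f_f[OF inj[OF that(2)] that(1)] by simp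
  have GS: "(G p, snd p) \<in> S" if "p \<in> S" for p using GA[OF that] that unfolding S_def by auto
  have hcS: "continuous_on S (\<lambda>y. h(c, snd y))" if "c \<in> A" for c
  proof -
    have "Ck2 (Suc q) S (\<lambda>y. h(c, snd y))"
      using Ck2_compose[OF h[folded S_def] Ck2_const[of "Suc q" S c] Ck2_snd] that unfolding S_def by auto
    then show ?thesis by (rule Ck2_cont)
  qed
  have cont: "continuous_on S G"
    unfolding continuous_on_eq_continuous_within
  proof
    fix p assume pS: "p \<in> S"
    define u0 where "u0 = G p"
    have u0A: "u0 \<in> A" using GA[OF pS] u0_def by simp
    have tB: "snd p \<in> B" using pS unfolding S_def by auto
    have hu0: "h(u0, snd p) = fst p" using hG[OF pS] u0_def by simp
    show "continuous (at p within S) G"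
      unfolding continuous_within tendsto_iff
    proof (intro allI impI)
      fix e :: real assume "e > 0"
      define c1 where "c1 = u0 + e/2"
      have c1A: "c1 \<in> A" using Aup[OF u0A] \<open>e>0\<close> c1_def by simp
      have lt1: "fst p < h(c1, snd p)" using smono[OF tB u0A c1A] \<open>e>0\<close> c1_def hu0 by simp
      have t1: "((\<lambda>y. h(c1, snd y)) \<longlongrightarrow> h(c1, snd p)) (at p within S)"
        using hcS[OF c1A] pS unfolding continuous_on_def by auto
      have t0: "(fst \<longlongrightarrow> fst p) (at p within S)"
        by (intro tendsto_intros)
      define m1 where "m1 = (fst p + h(c1, snd p)) / 2"
      have e1: "eventually (\<lambda>y. fst y < m1) (at p within S)"
        proof - have "fst p < m1" using lt1 m1_def by simp then show ?thesis using order_tendstoD(2)[OF t0] by blast qed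
      have e2: "eventually (\<lambda>y. m1 < h(c1, snd y)) (at p within S)"
        proof - have "m1 < h(c1, snd p)" using lt1 m1_def by simp then show ?thesis using order_tendstoD(1)[OF t1] by blast qed
      have up: "eventually (\<lambda>y. G y < u0 + e/2) (at p within S)"
        using e1 e2 ev_in_within
      proof eventually_elim
        case (elim y)
        show ?case
        proof (rule ccontr)
          assume "\<not> G y < u0 + e/2"
          then have "h(c1, snd y) \<le> h(G y, snd y)"
            using mono[of "snd y" c1 "G y"] c1A GA[OF elim(3)] elim(3) c1_def unfolding S_def by auto
          then show False using hG[OF elim(3)] elim(1,2) by simp
        qed
      qed
      have low: "eventually (\<lambda>y. u0 - e/2 < G y) (at p within S)"
      proof (cases "u0 - e/2 \<in> A")
        case True
        define c2 where "c2 = u0 - e/2"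
        have c2A: "c2 \<in> A" using True c2_def by simp
        have lt2: "h(c2, snd p) < fst p" using smono[OF tB c2A u0A] \<open>e>0\<close> c2_def hu0 by simp
        have t2: "((\<lambda>y. h(c2, snd y)) \<longlongrightarrow> h(c2, snd p)) (at p within S)"
          using hcS[OF c2A] pS unfolding continuous_on_def by auto
        define m2 where "m2 = (fst p + h(c2, snd p)) / 2"
        have e3: "eventually (\<lambda>y. m2 < fst y) (at p within S)"
          proof - have "m2 < fst p" using lt2 m2_def by simp then show ?thesis using order_tendstoD(1)[OF t0] by blast qed
        have e4: "eventually (\<lambda>y. h(c2, snd y) < m2) (at p within S)"
          proof - have "h(c2, snd p) < m2" using lt2 m2_def by simp then show ?thesis using order_tendstoD(2)[OF t2] by blast qed
        show ?thesis
          using e3 e4 ev_in_within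
        proof eventually_elim
          case (elim y)
          show ?case
          proof (rule ccontr)
            assume "\<not> u0 - e/2 < G y"
            then have "h(G y, snd y) \<le> h(c2, snd y)"
              using mono[of "snd y" "G y" c2] c2A GA[OF elim(3)] elim(3) c2_def unfolding S_def by auto
            then show False using hG[OF elim(3)] elim(1,2) by simp
          qed
        qed
      next
        case False
        then have "A = {0..}" "u0 - e/2 < 0" using A by auto
        then show ?thesis using ev_in_within[of S p]
          by (rule_tac eventually_mono) (use GA \<open>A = {0..}\<close> in force)+
      qed
      show "eventually (\<lambda>y. dist (G y) (G p) < e) (at p within S)"
        using up low
      proof eventually_elim
        case (elim y)
        then show ?case using u0_def \<open>e>0\<close> by (simp add: dist_real_def abs_less_iff)
      qed
    qed
  qed
  from Ck2_SucE[OF h[folded S_def]] obtain hg hh where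
    hd: "\<And>x. x\<in>S \<Longrightarrow> (h has_derivative (\<lambda>v. fst v * hg x + snd v * hh x)) (at x within S)"
    and hgq: "Ck2 q S hg" "Ck2 q S hh" by blast
  have hgpos: "hg x > 0" if xS: "x \<in> S" for x
  proof -
    obtain u t where x: "x = (u,t)" and u: "u\<in>A" and t: "t\<in>B" using xS unfolding S_def by auto
    obtain c where "c>0" and c: "\<forall>u1\<in>A. \<forall>u2\<in>A. u1 \<le> u2 \<longrightarrow> c*(u2-u1) \<le> h(u2,t) - h(u1,t)"
      using ex[OF t] by blast
    have "c \<le> hg x"
    proof (rule deriv_lower[where h=h and b="hh x" and u=u and t=t and A=A and B=B])
      show "(h has_derivative (\<lambda>v. fst v * hg x + snd v * hh x)) (at (u, t) within A \<times> B)"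
        using hd[OF xS] x unfolding S_def by simp
      fix s :: real assume "0 \<le> s"
      then have "u + s \<in> A" using Aup[OF u] by simp
      then show "c * s \<le> h (u + s, t) - h (u, t)" using c u \<open>0 \<le> s\<close> by force
    qed (use u t A in auto)
    then show ?thesis using \<open>c>0\<close> by simp
  qed
  have Gder: "(G has_derivative (\<lambda>w. fst w * (1 / hg (G p, snd p)) + snd w * ((-1) * (hh (G p, snd p) * (1 / hg (G p, snd p)))))) (at p within S)"
    if pS: "p \<in> S" for p
  proof -
    define x where "x = (G p, snd p)"
    define a where "a = hg x"
    define b where "b = hh x"
    have xS: "x \<in> S" using GS[OF pS] x_def by simp
    have apos: "a > 0" using hgpos[OF xS] a_def by simp
    define F where "F y = (h y, snd y)" for y
    have Fd: "(F has_derivative (\<lambda>v. (fst v * a + snd v * b, snd v))) (at x within S)"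
      unfolding F_def a_def b_def
      by (intro has_derivative_Pair hd[OF xS] bounded_linear_imp_has_derivative[OF bounded_linear_snd])
    have FS: "F ` S = S"
    proof
      show "F ` S \<subseteq> S"
      proof
        fix z assume "z \<in> F ` S"
        then obtain y where yS: "y \<in> S" and z: "z = F y" by auto
        obtain u t where y: "y = (u,t)" and u: "u\<in>A" and t: "t\<in>B" using yS unfolding S_def by auto
        have "h(u,t) \<in> A" using su[OF t] u by blast
        then show "z \<in> S" using z y t unfolding F_def S_def by auto
      qed
      show "S \<subseteq> F ` S"
      proof
        fix z assume zS: "z \<in> S"
        have "F (G z, snd z) = z" unfolding F_def using hG[OF zS] by simp
        then show "z \<in> F ` S" using GS[OF zS] by force
      qed
    qed
    have Fx: "F x = p" unfolding F_def x_def using hG[OF pS] by simp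
    have cGi: "continuous_on S (\<lambda>z. (G z, snd z))"
      using cont by (intro continuous_on_Pair continuous_on_snd continuous_on_id)
    then have Gi_cont: "continuous (at (F x) within F ` S) (\<lambda>z. (G z, snd z))"
      using Fx FS pS continuous_on_eq_continuous_within by metis
    define g' where "g' w = ((fst w - b * snd w) / a, snd w)" for w :: "real \<times> real"
    have lin: "linear g'"
      by (rule linearI) (auto simp: g'_def algebra_simps add_divide_distrib diff_divide_distrib)
    have idd: "g' \<circ> (\<lambda>v. (fst v * a + snd v * b, snd v)) = id"
      using apos by (auto simp: g'_def fun_eq_iff field_simps)
    have gf: "(\<lambda>z. (G z, snd z)) (F y) = y" if yS: "y \<in> S" for y
    proof -
      obtain u t where y: "y = (u,t)" and u: "u\<in>A" and t: "t\<in>B" using yS unfolding S_def by auto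
      show ?thesis using Gh[OF u t] y unfolding F_def by simp
    qed
    have "((\<lambda>z. (G z, snd z)) has_derivative g') (at (F x) within F ` S)"
      by (rule has_derivative_inverse_within[OF Fd Gi_cont xS lin idd gf])
    then have "((\<lambda>z. (G z, snd z)) has_derivative g') (at p within S)" using Fx FS by simp
    then have "((\<lambda>z. fst (G z, snd z)) has_derivative (\<lambda>w. fst (g' w))) (at p within S)"
      by (rule has_derivative_fst)
    then have "(G has_derivative (\<lambda>w. fst (g' w))) (at p within S)" by simp
    then show ?thesis
      by (rule has_derivative_eq_rhs) (use apos in \<open>auto simp: g'_def fun_eq_iff field_simps a_def b_def x_def\<close>)
  qed
  have Gk: "k \<le> Suc q \<Longrightarrow> Ck2 k S G" for k
  proof (induction k)
    case 0 then show ?case using cont by simp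
  next
    case (Suc k)
    then have Gk: "Ck2 k S G" by simp
    have kq: "k \<le> q" using Suc.prems by simp
    have c1: "Ck2 k S (\<lambda>p. hg (G p, snd p))"
      using Ck2_compose[OF Ck2_le[OF hgq(1) kq] Gk Ck2_snd] GS by blast
    have c2: "Ck2 k S (\<lambda>p. hh (G p, snd p))"
      using Ck2_compose[OF Ck2_le[OF hgq(2) kq] Gk Ck2_snd] GS by blast
    have c3: "Ck2 k S (\<lambda>p. 1 / hg (G p, snd p))"
      using Ck2_inverse[OF c1] hgpos GS by blast
    show ?case
      by (rule Ck2_SucI[OF Gder]) (use c2 c3 Ck2_mult Ck2_cmult in blast)+
  qed
  have "Ck2 (Suc q) S (\<lambda>p. f (G p, snd p))"
    using Ck2_compose[OF f[folded S_def] Gk[OF order_refl] Ck2_snd] GS by blast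
  then show ?thesis unfolding S_def G_def .
qed



lemma dirB:
  fixes A B :: "real set" and ph pb :: "nat \<Rightarrow> real \<times> real \<Rightarrow> real"
  assumes A: "A = UNIV \<or> A = {0..}"
    and pb: "\<And>j. j\<in>{1..I} \<Longrightarrow> Ck2 (Suc q) (A \<times> B) (pb j)"
    and rec: "\<And>p i. p \<in> A \<times> B \<Longrightarrow> i < I \<Longrightarrow> ph i p = ph (Suc i) p + 2 * (\<Sum>j=Suc i..I. pb j (ph j p, snd p))"
    and ph0: "\<And>p. p \<in> A \<times> B \<Longrightarrow> ph 0 p = fst p"
    and phA: "\<And>p i. p \<in> A \<times> B \<Longrightarrow> i \<le> I \<Longrightarrow> ph i p \<in> A"
    and surj: "\<And>t. t\<in>B \<Longrightarrow> (\<lambda>u. ph I (u,t)) ` A = A"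
    and mon: "\<And>t u1 u2. t\<in>B \<Longrightarrow> u1\<in>A \<Longrightarrow> u2\<in>A \<Longrightarrow> u1<u2 \<Longrightarrow>
               0 < ph I (u2,t) - ph I (u1,t) \<and> ph I (u2,t) - ph I (u1,t) \<le> u2 - u1"
    and i: "i \<in> {1..I}"
  shows "Ck2 (Suc q) (A \<times> B) (\<lambda>p. pb i (ph i p, snd p))"
proof -
  define S where "S = A \<times> B"
  define H where "H p = the_inv_into A (\<lambda>u. ph I (u, snd p)) (fst p)" for p
  have inj: "inj_on (\<lambda>u. ph I (u,t)) A" if tB: "t\<in>B" for t
    unfolding inj_on_def
  proof (intro ballI impI)
    fix x y assume "x\<in>A" "y\<in>A" "ph I (x,t) = ph I (y,t)"
    then show "x = y" using mon[OF tB, of x y] mon[OF tB, of y x] by (cases x y rule: linorder_cases) auto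
  qed
  have HA: "H p \<in> A" if pS: "p \<in> S" for p
    unfolding H_def using pS surj[of "snd p"] inj[of "snd p"] unfolding S_def
    by (intro the_inv_into_into) (auto simp: mem_Times_iff)
  have phH: "ph I (H p, snd p) = fst p" if pS: "p \<in> S" for p
    unfolding H_def using pS surj[of "snd p"] inj[of "snd p"] unfolding S_def
    by (intro f_the_inv_into_f[where f="\<lambda>u. ph I (u, snd p)", simplified]) (auto simp: mem_Times_iff)
  have Hph: "H (ph I (u,t), t) = u" if u: "u\<in>A" and t: "t\<in>B" for u t
    unfolding H_def using the_inv_into_f_f[OF inj[OF t] u] by simp
  have HS: "(H p, snd p) \<in> S" if pS: "p \<in> S" for p using HA[OF pS] pS unfolding S_def by auto
  define Phi where "Phi i p = ph i (H p, snd p)" for i p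
  have PhiS: "(Phi j p, snd p) \<in> S" if pS: "p \<in> S" and j: "j \<le> I" for p j
    using phA[OF HS[OF pS, unfolded S_def] j] pS unfolding Phi_def S_def by auto
  have main: "\<forall>i. i \<le> I \<longrightarrow> I - i \<le> m \<longrightarrow> Ck2 (Suc q) S (Phi i)" for m
  proof (induction m)
    case 0
    show ?case
    proof (intro allI impI)
      fix i assume "i \<le> I" "I - i \<le> 0"
      then have "i = I" by simp
      show "Ck2 (Suc q) S (Phi i)"
        by (rule Ck2_cong[OF Ck2_fst]) (use phH \<open>i = I\<close> in \<open>simp add: Phi_def\<close>)
    qed
  next
    case (Suc m)
    show ?case
    proof (intro allI impI)
      fix i assume iI: "i \<le> I" and im: "I - i \<le> Suc m"
      show "Ck2 (Suc q) S (Phi i)"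
      proof (cases "i = I")
        case True
        show ?thesis
          by (rule Ck2_cong[OF Ck2_fst]) (use phH True in \<open>simp add: Phi_def\<close>)
      next
        case False
        then have ilt: "i < I" using iI by simp
        have cj: "Ck2 (Suc q) S (Phi j)" if "j \<in> {Suc i..I}" for j
          using Suc.IH that im by auto
        have cj2: "Ck2 (Suc q) S (\<lambda>p. pb j (Phi j p, snd p))" if j: "j \<in> {Suc i..I}" for j
        proof -
          have "j \<in> {1..I}" using j by auto
          then show ?thesis
            using Ck2_compose[OF pb[folded S_def] cj[OF j] Ck2_snd] PhiS j by auto
        qed
        have "Ck2 (Suc q) S (\<lambda>p. Phi (Suc i) p + 2 * (\<Sum>j=Suc i..I. pb j (Phi j p, snd p)))"
          using cj[of "Suc i"] ilt cj2
          by (intro Ck2_add Ck2_cmult Ck2_sum) auto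
        then show ?thesis
        proof (rule Ck2_cong)
          fix p assume pS: "p \<in> S"
          show "Phi (Suc i) p + 2 * (\<Sum>j=Suc i..I. pb j (Phi j p, snd p)) = Phi i p"
            using rec[OF HS[OF pS, unfolded S_def] ilt] by (simp add: Phi_def)
        qed
      qed
    qed
  qed
  have Phik: "Ck2 (Suc q) S (Phi j)" if "j \<le> I" for j using main[of I] that by simp
  have HC: "Ck2 (Suc q) S H"
    by (rule Ck2_cong[OF Phik[of 0]]) (use ph0 HS in \<open>auto simp: Phi_def S_def\<close>)
  have fC: "Ck2 (Suc q) S (\<lambda>p. pb i (Phi i p, snd p))"
    using Ck2_compose[OF pb[OF i, folded S_def] Phik Ck2_snd] PhiS i by auto
  have ex: "\<exists>c>0. \<forall>u1\<in>A. \<forall>u2\<in>A. u1 \<le> u2 \<longrightarrow> c*(u2-u1) \<le> H(u2,t) - H(u1,t)" if tB: "t\<in>B" for t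
  proof (intro exI[of _ 1] conjI ballI impI)
    fix u1 u2 assume u1: "u1\<in>A" and u2: "u2\<in>A" and le: "u1 \<le> u2"
    have p1: "(u1,t) \<in> S" "(u2,t) \<in> S" using u1 u2 tB unfolding S_def by auto
    define v1 where "v1 = H(u1,t)"
    define v2 where "v2 = H(u2,t)"
    have v: "v1 \<in> A" "v2 \<in> A" "ph I (v1,t) = u1" "ph I (v2,t) = u2"
      using HA[OF p1(1)] HA[OF p1(2)] phH[OF p1(1)] phH[OF p1(2)] v1_def v2_def by auto
    show "1 * (u2 - u1) \<le> H (u2, t) - H (u1, t)"
    proof (cases v1 v2 rule: linorder_cases)
      case less then show ?thesis using mon[OF tB v(1,2) less] v v1_def v2_def by simp
    next
      case equal then show ?thesis using v v1_def v2_def by simp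
    next
      case greater then show ?thesis using mon[OF tB v(2,1) greater] v le by simp
    qed
  qed simp
  have su: "(\<lambda>u. H(u,t)) ` A = A" if tB: "t\<in>B" for t
  proof
    show "(\<lambda>u. H (u, t)) ` A \<subseteq> A" using HA tB unfolding S_def by auto
    show "A \<subseteq> (\<lambda>u. H (u, t)) ` A"
    proof
      fix v assume v: "v \<in> A"
      have "ph I (v,t) \<in> A" using surj[OF tB] v by blast
      then show "v \<in> (\<lambda>u. H (u, t)) ` A" using Hph[OF v tB] by force
    qed
  qed
  have R: "Ck2 (Suc q) S (\<lambda>p. pb i (Phi i (the_inv_into A (\<lambda>u. H(u, snd p)) (fst p), snd p), snd p))"
    using Ck2_inv_comp[OF A HC[unfolded S_def] fC[unfolded S_def] ex su] unfolding S_def by simp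
  show ?thesis unfolding S_def[symmetric]
  proof (rule Ck2_cong[OF R])
    fix p assume pS: "p \<in> S"
    obtain u t where p: "p = (u,t)" and u: "u\<in>A" and t: "t\<in>B" using pS unfolding S_def by auto
    have injH: "inj_on (\<lambda>w. H(w,t)) A"
      unfolding inj_on_def
    proof (intro ballI impI)
      fix x y assume x: "x\<in>A" and y: "y\<in>A" and e: "H(x,t) = H(y,t)"
      have "(x,t) \<in> S" "(y,t) \<in> S" using x y t unfolding S_def by auto
      then show "x = y" using phH e by (metis fst_conv snd_conv)
    qed
    have phIA: "ph I (u,t) \<in> A" using surj[OF t] u by blast
    have "the_inv_into A (\<lambda>w. H(w,t)) u = ph I (u,t)"
      by (rule the_inv_into_f_eq[OF injH Hph[OF u t] phIA])
    then show "pb i (Phi i (the_inv_into A (\<lambda>u. H(u, snd p)) (fst p), snd p), snd p) = pb i (ph i p, snd p)"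
      using p Hph[OF u t] by (simp add: Phi_def)
  qed
qed



lemma phi_diff:
  "phi I \<psi> i u2 - phi I \<psi> i u1 = (u2 - u1) - (\<Sum>j=1..I. 2 * real (min i j) * (\<psi> j u2 - \<psi> j u1))"
proof -
  have "(\<Sum>j=1..I. 2 * real (min i j) * (\<psi> j u2 - \<psi> j u1)) = (\<Sum>j=1..I. 2 * real (min i j) * \<psi> j u2) - (\<Sum>j=1..I. 2 * real (min i j) * \<psi> j u1)"
    by (simp add: right_diff_distrib sum_subtractf)
  then show ?thesis by (simp add: phi_def)
qed

lemma inF_psi:
  assumes "inF I \<psi>" "j \<in> {1..I}"
  shows "continuous_on {0..} (\<psi> j)" "\<And>u. u \<ge> 0 \<Longrightarrow> \<psi> j u \<ge> 0" "\<psi> j 0 = 0"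
    "\<And>u1 u2. 0 \<le> u1 \<Longrightarrow> u1 \<le> u2 \<Longrightarrow> \<psi> j u1 \<le> \<psi> j u2"
  using assms unfolding inF_def inC_def mono_on_def by auto

lemma inF_phiI:
  assumes "inF I \<psi>"
  shows "\<And>u. u \<ge> 0 \<Longrightarrow> phi I \<psi> I u \<ge> 0"
    "\<And>u1 u2. 0 \<le> u1 \<Longrightarrow> u1 < u2 \<Longrightarrow> phi I \<psi> I u1 < phi I \<psi> I u2"
    "filterlim (phi I \<psi> I) at_top at_top"
  using assms unfolding inF_def inCup_def inC_def strict_mono_on_def by auto

lemma phi_mono_cmp:
  assumes F: "inF I \<psi>" and i: "i \<le> I" and u: "0 \<le> u1" "u1 \<le> u2"
  shows "phi I \<psi> I u2 - phi I \<psi> I u1 \<le> phi I \<psi> i u2 - phi I \<psi> i u1"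
    "phi I \<psi> i u2 - phi I \<psi> i u1 \<le> u2 - u1"
proof -
  have d: "0 \<le> \<psi> j u2 - \<psi> j u1" if "j \<in> {1..I}" for j using inF_psi(4)[OF F that u] by simp
  have "(\<Sum>j=1..I. 2 * real (min i j) * (\<psi> j u2 - \<psi> j u1)) \<le> (\<Sum>j=1..I. 2 * real (min I j) * (\<psi> j u2 - \<psi> j u1))"
    by (rule sum_mono) (use d i in \<open>auto intro!: mult_right_mono\<close>)
  then show "phi I \<psi> I u2 - phi I \<psi> I u1 \<le> phi I \<psi> i u2 - phi I \<psi> i u1" unfolding phi_diff by simp
  have "0 \<le> (\<Sum>j=1..I. 2 * real (min i j) * (\<psi> j u2 - \<psi> j u1))"
    by (rule sum_nonneg) (use d in auto)
  then show "phi I \<psi> i u2 - phi I \<psi> i u1 \<le> u2 - u1" unfolding phi_diff by simp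
qed

lemma phi_zero: "inF I \<psi> \<Longrightarrow> phi I \<psi> i 0 = 0"
  unfolding phi_def by (auto intro!: sum.neutral simp: inF_psi(3))

lemma phi_ge_phiI:
  assumes F: "inF I \<psi>" and i: "i \<le> I" and u: "0 \<le> u"
  shows "phi I \<psi> I u \<le> phi I \<psi> i u" "0 \<le> phi I \<psi> i u" "phi I \<psi> i u \<le> u"
proof -
  show "phi I \<psi> I u \<le> phi I \<psi> i u" using phi_mono_cmp(1)[OF F i order_refl u] phi_zero[OF F] by simp
  then show "0 \<le> phi I \<psi> i u" using inF_phiI(1)[OF F u] by simp
  show "phi I \<psi> i u \<le> u" using phi_mono_cmp(2)[OF F i order_refl u] phi_zero[OF F] by simp
qed

lemma phi_strict:
  assumes F: "inF I \<psi>" and i: "i \<le> I" and u: "0 \<le> u1" "u1 < u2"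
  shows "phi I \<psi> i u1 < phi I \<psi> i u2"
  using phi_mono_cmp(1)[OF F i u(1) less_imp_le[OF u(2)]] inF_phiI(2)[OF F u] by linarith

lemma phi_inj: "inF I \<psi> \<Longrightarrow> i \<le> I \<Longrightarrow> inj_on (phi I \<psi> i) {0..}"
  unfolding inj_on_def
proof (intro ballI impI)
  fix x y assume F: "inF I \<psi>" and i: "i \<le> I" and xy: "x \<in> {0..}" "y \<in> {0..}" "phi I \<psi> i x = phi I \<psi> i y"
  then show "x = y" using phi_strict[OF F i, of x y] phi_strict[OF F i, of y x]
    by (cases x y rule: linorder_cases) auto
qed

lemma phi_cont: "inF I \<psi> \<Longrightarrow> continuous_on {0..} (phi I \<psi> i)"
  unfolding phi_def using inF_psi(1)
  by (auto intro!: continuous_intros)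

lemma phi_surj:
  assumes F: "inF I \<psi>" and i: "i \<le> I"
  shows "phi I \<psi> i ` {0..} = {0..}"
proof
  show "phi I \<psi> i ` {0..} \<subseteq> {0..}" using phi_ge_phiI(2)[OF F i] by auto
  show "{0..} \<subseteq> phi I \<psi> i ` {0..}"
  proof
    fix y :: real assume "y \<in> {0..}"
    then have y: "0 \<le> y" by simp
    obtain N where N: "\<forall>n\<ge>N. y \<le> phi I \<psi> I n"
      using inF_phiI(3)[OF F] unfolding filterlim_at_top eventually_at_top_linorder by blast
    define b where "b = max N 0"
    have "0 \<le> b" "N \<le> b" using b_def by auto
    then have "y \<le> phi I \<psi> i b" using N phi_ge_phiI(1)[OF F i \<open>0 \<le> b\<close>] by force
    moreover have "phi I \<psi> i 0 \<le> y" using phi_zero[OF F] y by simp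
    moreover have "continuous_on {0..b} (phi I \<psi> i)"
      using phi_cont[OF F] by (rule continuous_on_subset) auto
    ultimately obtain x where "0 \<le> x" "x \<le> b" "phi I \<psi> i x = y"
      using IVT'[of "phi I \<psi> i" 0 y b] b_def by auto
    then show "y \<in> phi I \<psi> i ` {0..}" by force
  qed
qed

lemma Ups_phi:
  assumes F: "inF I \<psi>" and i: "i \<le> I" and u: "0 \<le> u"
  shows "Upsilon I \<psi> i (phi I \<psi> i u) = \<psi> i u"
  unfolding Upsilon_def using the_inv_into_f_f[OF phi_inj[OF F i], of u] u by simp

lemma phi_rec:
  assumes "i < I"
  shows "phi I \<psi> i u = phi I \<psi> (Suc i) u + 2 * (\<Sum>j=Suc i..I. \<psi> j u)"
proof -
  have t: "2 * real (min (Suc i) j) * \<psi> j u = 2 * real (min i j) * \<psi> j u + (if Suc i \<le> j then 2 * \<psi> j u else 0)" for j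
    by (cases "Suc i \<le> j") (auto simp: min_def algebra_simps)
  have s: "{j \<in> {1..I}. Suc i \<le> j} = {Suc i..I}" by auto
  have "(\<Sum>j=1..I. 2 * real (min (Suc i) j) * \<psi> j u) = (\<Sum>j=1..I. 2 * real (min i j) * \<psi> j u) + (\<Sum>j=Suc i..I. 2 * \<psi> j u)"
    unfolding t sum.distrib using sum.inter_filter[of "{1..I}" "\<lambda>j. 2 * \<psi> j u" "\<lambda>j. Suc i \<le> j"] s by simp
  then show ?thesis unfolding phi_def by (simp add: sum_distrib_left)
qed



lemma sup_eq:
  assumes F: "inF I \<psi>" and i: "i \<in> {1..I}"
  shows "(SUP p\<in>{(a,b). a \<ge> 0 \<and> b \<ge> 0 \<and> a \<noteq> (b::real)}.
           ereal ((Upsilon I \<psi> i (fst p) - Upsilon I \<psi> i (snd p)) / (fst p - snd p)))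
       = (SUP p\<in>{(a,b). a \<ge> 0 \<and> b \<ge> 0 \<and> a \<noteq> (b::real)}.
           ereal ((\<psi> i (fst p) - \<psi> i (snd p)) / (phi I \<psi> i (fst p) - phi I \<psi> i (snd p))))"
proof -
  define P where "P = {(a,b). a \<ge> 0 \<and> b \<ge> 0 \<and> a \<noteq> (b::real)}"
  define Phi where "Phi p = (phi I \<psi> i (fst p), phi I \<psi> i (snd p))" for p
  have iI: "i \<le> I" using i by simp
  have inj: "inj_on (phi I \<psi> i) {0..}" using phi_inj[OF F iI] .
  have sur: "phi I \<psi> i ` {0..} = {0..}" using phi_surj[OF F iI] .
  have PP: "Phi ` P = P"
  proof
    show "Phi ` P \<subseteq> P"
    proof
      fix z assume "z \<in> Phi ` P"
      then obtain a b where ab: "a \<ge> 0" "b \<ge> 0" "a \<noteq> b" and z: "z = Phi (a,b)" unfolding P_def by auto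
      have "phi I \<psi> i a \<noteq> phi I \<psi> i b" using inj ab unfolding inj_on_def by auto
      then show "z \<in> P" using z ab phi_ge_phiI(2)[OF F iI] unfolding P_def Phi_def by auto
    qed
    show "P \<subseteq> Phi ` P"
    proof
      fix z assume "z \<in> P"
      then obtain z1 z2 where z: "z = (z1,z2)" "z1 \<ge> 0" "z2 \<ge> 0" "z1 \<noteq> z2" unfolding P_def by auto
      define a where "a = the_inv_into {0..} (phi I \<psi> i) z1"
      define b where "b = the_inv_into {0..} (phi I \<psi> i) z2"
      have "a \<in> {0..}" "b \<in> {0..}" using the_inv_into_into[OF inj] sur z a_def b_def by auto
      moreover have "phi I \<psi> i a = z1" "phi I \<psi> i b = z2"
        using f_the_inv_into_f[OF inj] sur z a_def b_def by auto
      ultimately show "z \<in> Phi ` P" using z unfolding P_def Phi_def by (intro image_eqI[of _ _ "(a,b)"]) auto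
    qed
  qed
  have pt: "ereal ((Upsilon I \<psi> i (fst (Phi p)) - Upsilon I \<psi> i (snd (Phi p))) / (fst (Phi p) - snd (Phi p)))
      = ereal ((\<psi> i (fst p) - \<psi> i (snd p)) / (phi I \<psi> i (fst p) - phi I \<psi> i (snd p)))" if "p \<in> P" for p
    using that Ups_phi[OF F iI] unfolding P_def Phi_def by auto
  have "(SUP p\<in>P. ereal ((Upsilon I \<psi> i (fst p) - Upsilon I \<psi> i (snd p)) / (fst p - snd p)))
      = (SUP p\<in>Phi ` P. ereal ((Upsilon I \<psi> i (fst p) - Upsilon I \<psi> i (snd p)) / (fst p - snd p)))"
    using PP by simp
  also have "\<dots> = (SUP p\<in>P. ereal ((Upsilon I \<psi> i (fst (Phi p)) - Upsilon I \<psi> i (snd (Phi p))) / (fst (Phi p) - snd (Phi p))))"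
    by (simp add: image_image)
  also have "\<dots> = (SUP p\<in>P. ereal ((\<psi> i (fst p) - \<psi> i (snd p)) / (phi I \<psi> i (fst p) - phi I \<psi> i (snd p))))"
    by (rule SUP_cong) (use pt in auto)
  finally show ?thesis unfolding P_def .
qed

lemma lip_expand:
  assumes F: "inF I \<psi>"
    and D: "(\<Sum>i=1..I. ereal (real i) *
        (SUP p\<in>{(a,b). a \<ge> 0 \<and> b \<ge> 0 \<and> a \<noteq> (b::real)}.
           ereal ((\<psi> i (fst p) - \<psi> i (snd p)) / (phi I \<psi> i (fst p) - phi I \<psi> i (snd p))))) < 1/2"
  shows "\<exists>c>0. c \<le> 1 \<and> (\<forall>i\<in>{1..I}. \<forall>u1 u2. 0 \<le> u1 \<longrightarrow> u1 \<le> u2 \<longrightarrow> c*(u2-u1) \<le> phi I \<psi> i u2 - phi I \<psi> i u1)"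
proof -
  define P where "P = {(a,b). a \<ge> 0 \<and> b \<ge> 0 \<and> a \<noteq> (b::real)}"
  define Sj where "Sj j = (SUP p\<in>P. ereal ((\<psi> j (fst p) - \<psi> j (snd p)) / (phi I \<psi> j (fst p) - phi I \<psi> j (snd p))))" for j
  have Dj: "(\<Sum>i=1..I. ereal (real i) * Sj i) < 1/2" using D unfolding Sj_def P_def .
  have Snn: "0 \<le> Sj j" if j: "j \<in> {1..I}" for j
  proof -
    have jI: "j \<le> I" using j by simp
    have "(1::real, 0::real) \<in> P" unfolding P_def by simp
    moreover have "0 \<le> (\<psi> j 1 - \<psi> j 0) / (phi I \<psi> j 1 - phi I \<psi> j 0)"
      using inF_psi(4)[OF F j, of 0 1] phi_strict[OF F jI, of 0 1] by (intro divide_nonneg_pos) auto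
    ultimately show ?thesis unfolding Sj_def
      by (intro SUP_upper2[of "(1,0)"]) auto
  qed
  have tnn: "0 \<le> ereal (real j) * Sj j" if "j \<in> {1..I}" for j
    using Snn[OF that] by simp
  have Sfin: "Sj j < \<infinity>" if j: "j \<in> {1..I}" for j
  proof (rule ccontr)
    assume "\<not> Sj j < \<infinity>"
    then have inf: "Sj j = \<infinity>" by simp
    have "(\<Sum>i=1..I. ereal (real i) * Sj i) = ereal (real j) * Sj j + (\<Sum>i\<in>{1..I}-{j}. ereal (real i) * Sj i)"
      using j by (simp add: sum.remove)
    moreover have "0 \<le> (\<Sum>i\<in>{1..I}-{j}. ereal (real i) * Sj i)" by (rule sum_nonneg) (use tnn in auto)
    moreover have "ereal (real j) * Sj j = \<infinity>" using inf j by simp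
    ultimately have "(\<Sum>i=1..I. ereal (real i) * Sj i) = \<infinity>" by simp
    then show False using Dj by simp
  qed
  define L where "L j = real_of_ereal (Sj j)" for j
  have SL: "Sj j = ereal (L j)" if "j \<in> {1..I}" for j
    using Snn[OF that] Sfin[OF that] unfolding L_def by (cases "Sj j") auto
  have Lnn: "0 \<le> L j" if "j \<in> {1..I}" for j using Snn[OF that] SL[OF that] by simp
  have "(\<Sum>i=1..I. ereal (real i) * Sj i) = ereal (\<Sum>i=1..I. real i * L i)"
    using SL by (simp add: sum_ereal[symmetric] del: sum_ereal)
  moreover have half: "(1/2::ereal) = ereal (1/2)"
    by (simp only: one_ereal_def numeral_eq_ereal ereal_divide) simp
  ultimately have sL: "(\<Sum>i=1..I. real i * L i) < 1/2" using Dj by (metis ereal_less(2) less_ereal.simps(1))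
  define c where "c = 1 - 2 * (\<Sum>i=1..I. real i * L i)"
  have sLnn: "0 \<le> (\<Sum>i=1..I. real i * L i)" by (rule sum_nonneg) (use Lnn in auto)
  have c: "0 < c" "c \<le> 1" using sL sLnn c_def by auto
  have key: "c*(u2-u1) \<le> phi I \<psi> i u2 - phi I \<psi> i u1" if i: "i \<in> {1..I}" and u: "0 \<le> u1" "u1 \<le> u2" for i u1 u2
  proof (cases "u1 = u2")
    case True then show ?thesis by simp
  next
    case False
    then have lt: "u1 < u2" using u by simp
    have dpsi: "\<psi> j u2 - \<psi> j u1 \<le> L j * (phi I \<psi> j u2 - phi I \<psi> j u1)" if j: "j \<in> {1..I}" for j
    proof -
      have jI: "j \<le> I" using j by simp
      have pos: "0 < phi I \<psi> j u2 - phi I \<psi> j u1" using phi_strict[OF F jI u(1) lt] by simp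
      have "(u2, u1) \<in> P" using u lt unfolding P_def by auto
      then have "ereal ((\<psi> j u2 - \<psi> j u1) / (phi I \<psi> j u2 - phi I \<psi> j u1)) \<le> Sj j"
        unfolding Sj_def by (intro SUP_upper2[of "(u2,u1)"]) auto
      then have "(\<psi> j u2 - \<psi> j u1) / (phi I \<psi> j u2 - phi I \<psi> j u1) \<le> L j" using SL[OF j] by simp
      then show ?thesis using pos by (simp add: pos_divide_le_eq mult.commute)
    qed
    have termb: "2 * real (min i j) * (\<psi> j u2 - \<psi> j u1) \<le> 2 * (real j * L j) * (u2 - u1)" if j: "j \<in> {1..I}" for j
    proof -
      have jI: "j \<le> I" using j by simp
      have d0: "0 \<le> \<psi> j u2 - \<psi> j u1" using inF_psi(4)[OF F j u] by simp
      have "2 * real (min i j) * (\<psi> j u2 - \<psi> j u1) \<le> 2 * real j * (\<psi> j u2 - \<psi> j u1)"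
        using d0 by (intro mult_right_mono) auto
      also have "\<dots> \<le> 2 * real j * (L j * (phi I \<psi> j u2 - phi I \<psi> j u1))"
        using dpsi[OF j] by (intro mult_left_mono) auto
      also have "\<dots> \<le> 2 * real j * (L j * (u2 - u1))"
        using phi_mono_cmp(2)[OF F jI u] Lnn[OF j] by (intro mult_left_mono) auto
      finally show ?thesis by (simp add: algebra_simps)
    qed
    have "(\<Sum>j=1..I. 2 * real (min i j) * (\<psi> j u2 - \<psi> j u1)) \<le> (\<Sum>j=1..I. 2 * (real j * L j) * (u2 - u1))"
      by (rule sum_mono) (use termb in auto)
    also have "\<dots> = 2 * (\<Sum>j=1..I. real j * L j) * (u2 - u1)"
      by (simp add: sum_distrib_left sum_distrib_right algebra_simps)
    finally show ?thesis unfolding phi_diff c_def by (simp add: algebra_simps)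
  qed
  show ?thesis using c key by blast
qed


declare Ck2.simps(2)[simp del]

lemma twoD_A:
  fixes \<psi> :: "nat \<Rightarrow> real \<Rightarrow> real \<Rightarrow> real"
  assumes Fall: "\<forall>t\<ge>0. inF I (\<lambda>j u. \<psi> j u t)"
    and expall: "\<forall>t\<ge>0. \<exists>c>0. c \<le> 1 \<and> (\<forall>i\<in>{1..I}. \<forall>u1 u2. 0 \<le> u1 \<longrightarrow> u1 \<le> u2 \<longrightarrow>
                  c*(u2-u1) \<le> phi I (\<lambda>j u. \<psi> j u t) i u2 - phi I (\<lambda>j u. \<psi> j u t) i u1)"
    and C2: "\<forall>j\<in>{1..I}. Ck2 (Suc q) ({0..} \<times> {0..}) (\<lambda>(u,t). \<psi> j u t)"
    and i: "i \<in> {1..I}"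
  shows "Ck2 (Suc q) ({0..} \<times> {0..}) (\<lambda>(z,t). Upsilon I (\<lambda>j u. \<psi> j u t) i z)"
proof -
  define S :: "(real \<times> real) set" where "S = {0..} \<times> {0..}"
  define pp where "pp j p = \<psi> j (fst p) (snd p)" for j p
  define h where "h p = phi I (\<lambda>j u. \<psi> j u (snd p)) i (fst p)" for p
  have ppC: "Ck2 (Suc q) S (pp j)" if "j \<in> {1..I}" for j
    using C2 that unfolding S_def pp_def by (simp add: case_prod_beta')
  have h_eq: "h = (\<lambda>p. fst p - (\<Sum>j=1..I. 2 * real (min i j) * pp j p))"
    unfolding h_def pp_def phi_def by simp
  have hC: "Ck2 (Suc q) S h" unfolding h_eq
    by (intro Ck2_diff Ck2_fst Ck2_sum Ck2_cmult ppC) auto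
  have iI: "i \<le> I" using i by simp
  have ex: "\<exists>c>0. \<forall>u1\<in>{0..}. \<forall>u2\<in>{0..}. u1 \<le> u2 \<longrightarrow> c*(u2-u1) \<le> h(u2,t) - h(u1,t)" if t: "t \<in> {0..}" for t
  proof -
    obtain c where "c>0" and c: "\<forall>i\<in>{1..I}. \<forall>u1 u2. 0 \<le> u1 \<longrightarrow> u1 \<le> u2 \<longrightarrow>
                  c*(u2-u1) \<le> phi I (\<lambda>j u. \<psi> j u t) i u2 - phi I (\<lambda>j u. \<psi> j u t) i u1"
      using expall t by auto
    then show ?thesis using i unfolding h_def by (intro exI[of _ c]) auto
  qed
  have su: "(\<lambda>u. h(u,t)) ` {0..} = {0..}" if t: "t \<in> {0..}" for t
    using phi_surj[OF Fall[rule_format, of t] iI] t unfolding h_def by simp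
  have R: "Ck2 (Suc q) S (\<lambda>p. pp i (the_inv_into {0..} (\<lambda>u. h(u, snd p)) (fst p), snd p))"
    using Ck2_inv_comp[of "{0..}" q "{0..}" h "pp i", OF _ hC[unfolded S_def] ppC[OF i, unfolded S_def] ex su]
    unfolding S_def by simp
  show ?thesis unfolding S_def[symmetric]
    by (rule Ck2_cong[OF R]) (simp add: pp_def h_def Upsilon_def case_prod_beta')
qed

lemma twoD_B:
  fixes \<psi> :: "nat \<Rightarrow> real \<Rightarrow> real \<Rightarrow> real"
  assumes Fall: "\<forall>t\<ge>0. inF I (\<lambda>j u. \<psi> j u t)"
    and C2: "\<forall>j\<in>{1..I}. Ck2 (Suc q) ({0..} \<times> {0..}) (\<lambda>(z,t). Upsilon I (\<lambda>j u. \<psi> j u t) j z)"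
    and i: "i \<in> {1..I}"
  shows "Ck2 (Suc q) ({0..} \<times> {0..}) (\<lambda>(u,t). \<psi> i u t)"
proof -
  define ph where "ph i p = phi I (\<lambda>j u. \<psi> j u (snd p)) i (fst p)" for i p
  define pb where "pb j p = Upsilon I (\<lambda>j u. \<psi> j u (snd p)) j (fst p)" for j p
  have Fp: "inF I (\<lambda>j u. \<psi> j u (snd p))" if "p \<in> {0..} \<times> {0..}" for p :: "real \<times> real"
    using Fall that by auto
  have R: "Ck2 (Suc q) ({0..} \<times> {0..}) (\<lambda>p. pb i (ph i p, snd p))"
  proof (rule dirB[where ph=ph and pb=pb and I=I])
    show "Ck2 (Suc q) ({0..} \<times> {0..}) (pb j)" if "j \<in> {1..I}" for j
      using C2 that unfolding pb_def by (simp add: case_prod_beta')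
    show "ph k p = ph (Suc k) p + 2 * (\<Sum>j=Suc k..I. pb j (ph j p, snd p))"
      if p: "p \<in> {0..} \<times> {0..}" and k: "k < I" for p k
    proof -
      have "(\<Sum>j=Suc k..I. pb j (ph j p, snd p)) = (\<Sum>j=Suc k..I. \<psi> j (fst p) (snd p))"
      proof (rule sum.cong)
        fix j assume "j \<in> {Suc k..I}"
        then have "j \<le> I" by simp
        then show "pb j (ph j p, snd p) = \<psi> j (fst p) (snd p)"
        proof -
          have "0 \<le> fst p" using p by auto
          then show ?thesis unfolding pb_def ph_def using Ups_phi[OF Fp[OF p] \<open>j \<le> I\<close>] by simp
        qed
      qed simp
      then show ?thesis unfolding ph_def using phi_rec[OF k] by simp
    qed
    show "ph 0 p = fst p" for p unfolding ph_def phi_def by simp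
    show "ph k p \<in> {0..}" if p: "p \<in> {0..} \<times> {0..}" and k: "k \<le> I" for p k
    proof -
      have "0 \<le> phi I (\<lambda>j u. \<psi> j u (snd p)) k (fst p)"
        by (rule phi_ge_phiI(2)[OF Fp[OF p] k]) (use p in auto)
      then show ?thesis unfolding ph_def by simp
    qed
    show "(\<lambda>u. ph I (u,t)) ` {0..} = {0..}" if t: "t \<in> {0..}" for t
    proof -
      have Ft: "inF I (\<lambda>j u. \<psi> j u t)" using Fall t by simp
      have eq: "(\<lambda>u. ph I (u,t)) = phi I (\<lambda>j u. \<psi> j u t) I" unfolding ph_def by (simp add: fun_eq_iff)
      show ?thesis unfolding eq by (rule phi_surj[OF Ft order_refl])
    qed
    show "0 < ph I (u2,t) - ph I (u1,t) \<and> ph I (u2,t) - ph I (u1,t) \<le> u2 - u1"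
      if t: "t \<in> {0..}" and u: "u1 \<in> {0..}" "u2 \<in> {0..}" "u1 < u2" for t u1 u2
    proof -
      have Ft: "inF I (\<lambda>j u. \<psi> j u t)" using Fall t by simp
      have u1: "0 \<le> u1" using u by simp
      have a: "phi I (\<lambda>j u. \<psi> j u t) I u1 < phi I (\<lambda>j u. \<psi> j u t) I u2"
        by (rule phi_strict[OF Ft order_refl u1 u(3)])
      have b: "phi I (\<lambda>j u. \<psi> j u t) I u2 - phi I (\<lambda>j u. \<psi> j u t) I u1 \<le> u2 - u1"
        by (rule phi_mono_cmp(2)[OF Ft order_refl u1 less_imp_le[OF u(3)]])
      show ?thesis using a b unfolding ph_def by simp
    qed
  qed (use i in auto)
  show ?thesis
  proof (rule Ck2_cong[OF R])
    fix p :: "real \<times> real" assume p: "p \<in> {0..} \<times> {0..}"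
    show "pb i (ph i p, snd p) = (\<lambda>(u,t). \<psi> i u t) p"
      unfolding pb_def ph_def using Ups_phi[OF Fp[OF p], of i "fst p"] i p by (auto simp: case_prod_beta')
  qed
qed



lemma oneD_A:
  fixes \<psi> :: "nat \<Rightarrow> real \<Rightarrow> real"
  assumes F: "inF I \<psi>" and c: "0 < c" "c \<le> 1"
    and exp: "\<forall>i\<in>{1..I}. \<forall>u1 u2. 0 \<le> u1 \<longrightarrow> u1 \<le> u2 \<longrightarrow> c*(u2-u1) \<le> phi I \<psi> i u2 - phi I \<psi> i u1"
    and Cq: "\<forall>j\<in>{1..I}. Ck (Suc q) (zext (\<psi> j))"
    and i: "i \<in> {1..I}"
  shows "Ck (Suc q) (zext (Upsilon I \<psi> i))"
proof -
  define S :: "(real \<times> real) set" where "S = UNIV \<times> {0}"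
  define pp where "pp j p = zext (\<psi> j) (fst p)" for j and p :: "real \<times> real"
  define h where "h p = fst p - (\<Sum>j=1..I. 2 * real (min i j) * pp j p)" for p :: "real \<times> real"
  have iI: "i \<le> I" using i by simp
  have ppC: "Ck2 (Suc q) S (pp j)" if "j \<in> {1..I}" for j
    unfolding pp_def using Ck_to_Ck2 Cq that by blast
  have hC: "Ck2 (Suc q) S h" unfolding h_def[abs_def]
    by (intro Ck2_diff Ck2_fst Ck2_sum Ck2_cmult ppC) auto
  have hx: "h (x,t) = (if x < 0 then x else phi I \<psi> i x)" for x t
    unfolding h_def pp_def zext_def phi_def by simp
  have phi0: "phi I \<psi> i 0 = 0" by (rule phi_zero[OF F])
  have expi: "c*(u2-u1) \<le> phi I \<psi> i u2 - phi I \<psi> i u1" if "0 \<le> u1" "u1 \<le> u2" for u1 u2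
    using exp i that by blast
  have hexp: "c*(u2-u1) \<le> h(u2,t) - h(u1,t)" if le: "u1 \<le> u2" for u1 u2 t
  proof (cases "0 \<le> u1")
    case True then show ?thesis using expi[OF True le] le hx by simp
  next
    case False
    show ?thesis
    proof (cases "u2 < 0")
      case True
      have "c*(u2-u1) \<le> 1*(u2-u1)" using c le by (intro mult_right_mono) auto
      then show ?thesis using True False hx by simp
    next
      case u2: False
      have "c*(u2-0) \<le> phi I \<psi> i u2 - phi I \<psi> i 0" using expi[of 0 u2] u2 by simp
      moreover have "(1 - c) * u1 \<le> 0" using c False by (intro mult_nonneg_nonpos) auto
      then have "u1 \<le> c * u1" by (simp add: algebra_simps)
      moreover have "h(u2,t) = phi I \<psi> i u2" "h(u1,t) = u1" using hx[of u2 t] hx[of u1 t] False u2 by auto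
      ultimately show ?thesis using phi0 by (simp add: algebra_simps)
    qed
  qed
  have hstrict: "h(u1,t) < h(u2,t)" if "u1 < u2" for u1 u2 t
  proof -
    have "0 < c*(u2-u1)" using c that by simp
    then show ?thesis using hexp[of u1 u2 t] that by simp
  qed
  have hinj: "inj_on (\<lambda>u. h(u,t)) UNIV" for t
    unfolding inj_on_def using hstrict by (metis less_irrefl linorder_neqE_linordered_idom)
  have inv0: "the_inv_into {0..} (phi I \<psi> i) y \<ge> 0 \<and> phi I \<psi> i (the_inv_into {0..} (phi I \<psi> i) y) = y" if "y \<ge> 0" for y
    using the_inv_into_into[OF phi_inj[OF F iI], of y] f_the_inv_into_f[OF phi_inj[OF F iI], of y]
      phi_surj[OF F iI] that by auto
  have su: "(\<lambda>u. h(u,t)) ` UNIV = UNIV" for t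
  proof -
    have "y \<in> (\<lambda>u. h(u,t)) ` UNIV" for y
    proof (cases "y < 0")
      case True then show ?thesis using hx[of y t] by (intro image_eqI[of _ _ y]) auto
    next
      case False
      then show ?thesis using inv0[of y] hx[of "the_inv_into {0..} (phi I \<psi> i) y" t]
        by (intro image_eqI[of _ _ "the_inv_into {0..} (phi I \<psi> i) y"]) auto
    qed
    then show ?thesis by auto
  qed
  have R: "Ck2 (Suc q) S (\<lambda>p. pp i (the_inv_into UNIV (\<lambda>u. h(u, snd p)) (fst p), snd p))"
    using Ck2_inv_comp[of UNIV q "{0}" h "pp i", OF _ hC[unfolded S_def] ppC[OF i, unfolded S_def]] hexp su c(1)
    unfolding S_def by blast
  have R2: "Ck (Suc q) (\<lambda>x. zext (\<psi> i) (the_inv_into UNIV (\<lambda>u. h(u, 0)) x))"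
    using Ck2_to_Ck[OF R[unfolded S_def]] unfolding pp_def by simp
  have eq: "(\<lambda>x. zext (\<psi> i) (the_inv_into UNIV (\<lambda>u. h(u, 0)) x)) = zext (Upsilon I \<psi> i)"
  proof
    fix x
    show "zext (\<psi> i) (the_inv_into UNIV (\<lambda>u. h(u, 0)) x) = zext (Upsilon I \<psi> i) x"
    proof (cases "x < 0")
      case True
      have "the_inv_into UNIV (\<lambda>u. h(u, 0)) x = x"
        by (rule the_inv_into_f_eq[OF hinj]) (use hx True in auto)
      then show ?thesis using True by (simp add: zext_def)
    next
      case False
      define v where "v = the_inv_into {0..} (phi I \<psi> i) x"
      have v: "v \<ge> 0" "phi I \<psi> i v = x" using inv0[of x] False v_def by auto
      have "the_inv_into UNIV (\<lambda>u. h(u, 0)) x = v"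
        by (rule the_inv_into_f_eq[OF hinj]) (use hx v in auto)
      then show ?thesis using False v by (simp add: zext_def Upsilon_def v_def)
    qed
  qed
  show ?thesis using R2 unfolding eq .
qed

lemma oneD_B:
  fixes \<psi> :: "nat \<Rightarrow> real \<Rightarrow> real"
  assumes F: "inF I \<psi>"
    and Cq: "\<forall>j\<in>{1..I}. Ck (Suc q) (zext (Upsilon I \<psi> j))"
    and i: "i \<in> {1..I}"
  shows "Ck (Suc q) (zext (\<psi> i))"
proof -
  define ph where "ph k p = (if fst p < 0 then fst p else phi I \<psi> k (fst p))" for k and p :: "real \<times> real"
  define pb where "pb j p = zext (Upsilon I \<psi> j) (fst p)" for j and p :: "real \<times> real"
  have R: "Ck2 (Suc q) (UNIV \<times> {0}) (\<lambda>p. pb i (ph i p, snd p))"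
  proof (rule dirB[where ph=ph and pb=pb and I=I])
    show "Ck2 (Suc q) (UNIV \<times> {0}) (pb j)" if "j \<in> {1..I}" for j
      unfolding pb_def using Ck_to_Ck2 Cq that by blast
    show "ph k p = ph (Suc k) p + 2 * (\<Sum>j=Suc k..I. pb j (ph j p, snd p))"
      if k: "k < I" for p k
    proof (cases "fst p < 0")
      case True
      then show ?thesis unfolding ph_def pb_def by (simp add: zext_def)
    next
      case False
      have "(\<Sum>j=Suc k..I. pb j (ph j p, snd p)) = (\<Sum>j=Suc k..I. \<psi> j (fst p))"
      proof (rule sum.cong)
        fix j assume "j \<in> {Suc k..I}"
        then have jI: "j \<le> I" by simp
        have "0 \<le> phi I \<psi> j (fst p)" using phi_ge_phiI(2)[OF F jI] False by simp
        then show "pb j (ph j p, snd p) = \<psi> j (fst p)"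
          unfolding pb_def ph_def using Ups_phi[OF F jI] False by (simp add: zext_def)
      qed simp
      then show ?thesis unfolding ph_def using phi_rec[OF k] False by simp
    qed
    show "ph 0 p = fst p" for p unfolding ph_def phi_def by simp
    show "ph k p \<in> UNIV" for k p by simp
    show "(\<lambda>u. ph I (u,t)) ` UNIV = UNIV" for t
    proof -
      have "y \<in> (\<lambda>u. ph I (u,t)) ` UNIV" for y
      proof (cases "y < 0")
        case True then show ?thesis unfolding ph_def by (intro image_eqI[of _ _ y]) auto
      next
        case False
        then have "y \<in> phi I \<psi> I ` {0..}" using phi_surj[OF F order_refl] by simp
        then obtain v where "v \<ge> 0" "phi I \<psi> I v = y" by auto
        then show ?thesis unfolding ph_def by (intro image_eqI[of _ _ v]) auto
      qed
      then show ?thesis by auto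
    qed
    show "0 < ph I (u2,t) - ph I (u1,t) \<and> ph I (u2,t) - ph I (u1,t) \<le> u2 - u1"
      if u: "u1 < u2" for t u1 u2
    proof (cases "0 \<le> u1")
      case True
      then show ?thesis unfolding ph_def
        using phi_strict[OF F order_refl True u] phi_mono_cmp(2)[OF F order_refl True less_imp_le[OF u]] u by auto
    next
      case False
      show ?thesis
      proof (cases "u2 < 0")
        case True then show ?thesis unfolding ph_def using False u by auto
      next
        case u2: False
        then have "0 \<le> phi I \<psi> I u2" "phi I \<psi> I u2 \<le> u2"
          using phi_ge_phiI(2,3)[OF F order_refl] by auto
        then show ?thesis unfolding ph_def using False u2 by auto
      qed
    qed
  qed (use i in auto)
  have R2: "Ck (Suc q) (\<lambda>x. pb i (ph i (x,0), 0))"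
    using Ck2_to_Ck[OF R] by simp
  have eq: "(\<lambda>x. pb i (ph i (x,0), 0)) = zext (\<psi> i)"
  proof
    fix x
    have iI: "i \<le> I" using i by simp
    show "pb i (ph i (x,0), 0) = zext (\<psi> i) x"
    proof (cases "x < 0")
      case True then show ?thesis unfolding pb_def ph_def by (simp add: zext_def)
    next
      case False
      have "0 \<le> phi I \<psi> i x" using phi_ge_phiI(2)[OF F iI] False by simp
      then show ?thesis unfolding pb_def ph_def using Ups_phi[OF F iI] False by (simp add: zext_def)
    qed
  qed
  show ?thesis using R2 unfolding eq .
qed



lemma Ups_inC:
  fixes \<psi> :: "nat \<Rightarrow> real \<Rightarrow> real"
  assumes F: "inF I \<psi>" and i: "i \<in> {1..I}" and C: "Ck (Suc q) (zext (Upsilon I \<psi> i))"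
  shows "inC (Upsilon I \<psi> i)"
proof -
  have iI: "i \<le> I" using i by simp
  have inj: "inj_on (phi I \<psi> i) {0..}" by (rule phi_inj[OF F iI])
  have sur: "phi I \<psi> i ` {0..} = {0..}" by (rule phi_surj[OF F iI])
  define v where "v z = the_inv_into {0..} (phi I \<psi> i) z" for z
  have v: "v z \<ge> 0" "phi I \<psi> i (v z) = z" if "z \<ge> 0" for z
    using the_inv_into_into[OF inj, of z] f_the_inv_into_f[OF inj, of z] sur that v_def by auto
  have U: "Upsilon I \<psi> i z = \<psi> i (v z)" for z unfolding Upsilon_def v_def by simp
  have "\<forall>x. zext (Upsilon I \<psi> i) differentiable (at x)" using C by simp
  then have "continuous_on UNIV (zext (Upsilon I \<psi> i))"
    using differentiable_imp_continuous_within continuous_at_imp_continuous_on by blast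
  then have "continuous_on {0..} (zext (Upsilon I \<psi> i))" by (rule continuous_on_subset) simp
  then have c: "continuous_on {0..} (Upsilon I \<psi> i)"
    by (rule continuous_on_cong[THEN iffD1, rotated 2]) (auto simp: zext_def)
  have nn: "\<forall>u\<ge>0. Upsilon I \<psi> i u \<ge> 0" using U v inF_psi(2)[OF F i] by simp
  have z: "Upsilon I \<psi> i 0 = 0"
    using Ups_phi[OF F iI, of 0] phi_zero[OF F, of i] inF_psi(3)[OF F i] by simp
  have m: "mono_on {0..} (Upsilon I \<psi> i)"
    unfolding mono_on_def
  proof (intro allI impI)
    fix r s :: real assume rs: "r \<in> {0..} \<and> s \<in> {0..} \<and> r \<le> s"
    have "v r \<le> v s"
    proof (rule ccontr)
      assume "\<not> v r \<le> v s"
      then have "phi I \<psi> i (v s) < phi I \<psi> i (v r)" using phi_strict[OF F iI, of "v s" "v r"] v rs by auto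
      then show False using v rs by auto
    qed
    then show "Upsilon I \<psi> i r \<le> Upsilon I \<psi> i s" using U inF_psi(4)[OF F i] v rs by auto
  qed
  show ?thesis unfolding inC_def using c nn z m by blast
qed

theorem lemma6p4:
  fixes I q :: nat and \<psi> :: "nat \<Rightarrow> real \<Rightarrow> real \<Rightarrow> real"
  assumes "I \<ge> 1" and "q \<ge> 1"
    and "\<forall>t\<ge>0. inF I (\<lambda>i u. \<psi> i u t)"
  shows "((\<forall>t\<ge>0. inDq q I (\<lambda>i u. \<psi> i u t)) \<and> (\<forall>i\<in>{1..I}. inCq2 q (\<psi> i)))
     \<longleftrightarrow> ((\<forall>t\<ge>0. inDbarq q I (\<lambda>i z. Upsilon I (\<lambda>j u. \<psi> j u t) i z))
          \<and> (\<forall>i\<in>{1..I}. inCq2 q (\<lambda>z t. Upsilon I (\<lambda>j u. \<psi> j u t) i z)))"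
proof -
  note Fall = assms(3)
  obtain q' where q: "q = Suc q'" using assms(2) by (cases q) auto
  define SS where "SS t = (\<Sum>i=1..I. ereal (real i) *
        (SUP p\<in>{(a,b). a \<ge> 0 \<and> b \<ge> 0 \<and> a \<noteq> (b::real)}.
           ereal ((\<psi> i (fst p) t - \<psi> i (snd p) t) / (phi I (\<lambda>i u. \<psi> i u t) i (fst p) - phi I (\<lambda>i u. \<psi> i u t) i (snd p)))))" for t
  define SB where "SB t = (\<Sum>i=1..I. ereal (real i) *
        (SUP p\<in>{(a,b). a \<ge> 0 \<and> b \<ge> 0 \<and> a \<noteq> (b::real)}.
           ereal ((Upsilon I (\<lambda>j u. \<psi> j u t) i (fst p) - Upsilon I (\<lambda>j u. \<psi> j u t) i (snd p)) / (fst p - snd p))))" for t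
  have SE: "SB t = SS t" if t: "t \<ge> 0" for t
    unfolding SB_def SS_def
    by (rule sum.cong[OF refl]) (use sup_eq[OF Fall[rule_format, OF t]] in simp)
  have inD_iff: "inD I (\<lambda>i u. \<psi> i u t) \<longleftrightarrow> SS t < 1/2" if t: "t \<ge> 0" for t
    unfolding inD_def SS_def using Fall t by simp
  have inDbar_iff: "inDbar I (\<lambda>i z. Upsilon I (\<lambda>j u. \<psi> j u t) i z) \<longleftrightarrow>
      (\<forall>i\<in>{1..I}. inC (Upsilon I (\<lambda>j u. \<psi> j u t) i)) \<and> SB t < 1/2" for t
    unfolding inDbar_def SB_def by simp
  have expall: "\<exists>c>0. c \<le> 1 \<and> (\<forall>i\<in>{1..I}. \<forall>u1 u2. 0 \<le> u1 \<longrightarrow> u1 \<le> u2 \<longrightarrow>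
                  c*(u2-u1) \<le> phi I (\<lambda>j u. \<psi> j u t) i u2 - phi I (\<lambda>j u. \<psi> j u t) i u1)"
    if t: "t \<ge> 0" and s: "SS t < 1/2" for t
    using lip_expand[OF Fall[rule_format, OF t]] s unfolding SS_def by simp
  have Ft: "inF I (\<lambda>i u. \<psi> i u t)" if "t \<ge> 0" for t using Fall that by blast
  show ?thesis
  proof
    assume L: "(\<forall>t\<ge>0. inDq q I (\<lambda>i u. \<psi> i u t)) \<and> (\<forall>i\<in>{1..I}. inCq2 q (\<psi> i))"
    have Ls: "SS t < 1/2" if t: "t \<ge> 0" for t
      using L t inD_iff[OF t] unfolding inDq_def by blast
    have Lc: "Ck (Suc q') (zext (\<lambda>u. \<psi> j u t))" if t: "t \<ge> 0" and j: "j \<in> {1..I}" for t j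
      using L t j unfolding inDq_def inCq_def q by auto
    have UC: "Ck (Suc q') (zext (Upsilon I (\<lambda>j u. \<psi> j u t) i))" if t: "t \<ge> 0" and i: "i \<in> {1..I}" for t i
    proof -
      obtain c where c: "c > 0" "c \<le> 1" and ex: "\<forall>i\<in>{1..I}. \<forall>u1 u2. 0 \<le> u1 \<longrightarrow> u1 \<le> u2 \<longrightarrow>
                  c*(u2-u1) \<le> phi I (\<lambda>j u. \<psi> j u t) i u2 - phi I (\<lambda>j u. \<psi> j u t) i u1"
        using expall[OF t Ls[OF t]] by blast
      show ?thesis
        by (rule oneD_A[OF Ft[OF t] c ex _ i]) (use Lc[OF t] in simp)
    qed
    have UinC: "inC (Upsilon I (\<lambda>j u. \<psi> j u t) i)" if t: "t \<ge> 0" and i: "i \<in> {1..I}" for t i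
      by (rule Ups_inC[OF Ft[OF t] i UC[OF t i]])
    have part1: "inDbarq q I (\<lambda>i z. Upsilon I (\<lambda>j u. \<psi> j u t) i z)" if t: "t \<ge> 0" for t
    proof -
      have "inDbar I (\<lambda>i z. Upsilon I (\<lambda>j u. \<psi> j u t) i z)"
        unfolding inDbar_iff using UinC[OF t] SE[OF t] Ls[OF t] by simp
      moreover have "\<forall>i\<in>{1..I}. inCq q (Upsilon I (\<lambda>j u. \<psi> j u t) i)"
        unfolding inCq_def q using UinC[OF t] UC[OF t] by blast
      ultimately show ?thesis unfolding inDbarq_def by simp
    qed
    have part2: "inCq2 q (\<lambda>z t. Upsilon I (\<lambda>j u. \<psi> j u t) i z)" if i: "i \<in> {1..I}" for i
    proof -
      have C2: "\<forall>j\<in>{1..I}. Ck2 (Suc q') ({0..} \<times> {0..}) (\<lambda>(u,t). \<psi> j u t)"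
        using L unfolding inCq2_def q by blast
      have ea: "\<forall>t\<ge>0. \<exists>c>0. c \<le> 1 \<and> (\<forall>i\<in>{1..I}. \<forall>u1 u2. 0 \<le> u1 \<longrightarrow> u1 \<le> u2 \<longrightarrow>
                  c*(u2-u1) \<le> phi I (\<lambda>j u. \<psi> j u t) i u2 - phi I (\<lambda>j u. \<psi> j u t) i u1)"
        using expall Ls by blast
      have "Ck2 (Suc q') ({0..} \<times> {0..}) (\<lambda>(z,t). Upsilon I (\<lambda>j u. \<psi> j u t) i z)"
        by (rule twoD_A[OF Fall ea C2 i])
      moreover have "\<forall>u\<ge>0. \<forall>t\<ge>0. Upsilon I (\<lambda>j u. \<psi> j u t) i u \<ge> 0"
        using UinC i unfolding inC_def by blast
      ultimately show ?thesis unfolding inCq2_def q by simp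
    qed
    show "(\<forall>t\<ge>0. inDbarq q I (\<lambda>i z. Upsilon I (\<lambda>j u. \<psi> j u t) i z))
          \<and> (\<forall>i\<in>{1..I}. inCq2 q (\<lambda>z t. Upsilon I (\<lambda>j u. \<psi> j u t) i z))"
      using part1 part2 by blast
  next
    assume R: "(\<forall>t\<ge>0. inDbarq q I (\<lambda>i z. Upsilon I (\<lambda>j u. \<psi> j u t) i z))
          \<and> (\<forall>i\<in>{1..I}. inCq2 q (\<lambda>z t. Upsilon I (\<lambda>j u. \<psi> j u t) i z))"
    have Rs: "SS t < 1/2" if t: "t \<ge> 0" for t
    proof -
      have "inDbar I (\<lambda>i z. Upsilon I (\<lambda>j u. \<psi> j u t) i z)" using R t unfolding inDbarq_def by blast
      then have "SB t < 1/2" unfolding inDbar_iff by blast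
      then show ?thesis using SE[OF t] by simp
    qed
    have Rc: "Ck (Suc q') (zext (Upsilon I (\<lambda>j u. \<psi> j u t) j))" if t: "t \<ge> 0" and j: "j \<in> {1..I}" for t j
    proof -
      have "inCq q (\<lambda>z. Upsilon I (\<lambda>j u. \<psi> j u t) j z)" using R t j unfolding inDbarq_def by blast
      then show ?thesis unfolding inCq_def q by simp
    qed
    have part1: "inDq q I (\<lambda>i u. \<psi> i u t)" if t: "t \<ge> 0" for t
    proof -
      have "inD I (\<lambda>i u. \<psi> i u t)" using inD_iff[OF t] Rs[OF t] by simp
      moreover have "inCq q (\<lambda>u. \<psi> i u t)" if i: "i \<in> {1..I}" for i
      proof -
        have "inC (\<lambda>u. \<psi> i u t)" using Ft[OF t] i unfolding inF_def by simp
        moreover have "Ck (Suc q') (zext ((\<lambda>i u. \<psi> i u t) i))"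
          by (rule oneD_B[OF Ft[OF t] _ i]) (use Rc[OF t] in simp)
        ultimately show ?thesis unfolding inCq_def q by simp
      qed
      ultimately show ?thesis unfolding inDq_def by simp
    qed
    have part2: "inCq2 q (\<psi> i)" if i: "i \<in> {1..I}" for i
    proof -
      have C2: "\<forall>j\<in>{1..I}. Ck2 (Suc q') ({0..} \<times> {0..}) (\<lambda>(z,t). Upsilon I (\<lambda>j u. \<psi> j u t) j z)"
        using R unfolding inCq2_def q by blast
      have "Ck2 (Suc q') ({0..} \<times> {0..}) (\<lambda>(u,t). \<psi> i u t)"
        by (rule twoD_B[OF Fall C2 i])
      moreover have "\<forall>u\<ge>0. \<forall>t\<ge>0. \<psi> i u t \<ge> 0"
        using Ft i unfolding inF_def inC_def by blast
      ultimately show ?thesis unfolding inCq2_def q by simp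
    qed
    show "(\<forall>t\<ge>0. inDq q I (\<lambda>i u. \<psi> i u t)) \<and> (\<forall>i\<in>{1..I}. inCq2 q (\<psi> i))"
      using part1 part2 by blast
  qed
qed

end
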